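(* Let $\mathbf A\in\mathbb C^{n\times n}$ with $\operatorname{Ind}\mathbf A=k$ and $\operatorname{rank}\mathbf A^{k+1}=\operatorname{rank}\mathbf A^{k}=r\le n$. Then $\mathbf A^{D}\mathbf A=(p_{ij})$ satisfies, for all $i,j=1,\dots,n$, \[p_{ij}=\frac{\sum_{\beta\in J_{r,n}\{i\}}\left|\left(\mathbf A^{k+1}_{.i}(\mathbf a^{(k+1)}_{.j})\right)^{\beta}_{\beta}\right|}{\sum_{\beta\in J_{r,n}}\left|(\mathbf A^{k+1})^{\beta}_{\beta}\right|},\] where $\mathbf a^{(k+1)}_{.j}$ is the $j$-th column of $\mathbf A^{k+1}$.
   Context: $\operatorname{Ind}\mathbf A$ is the smallest nonnegative $k$ with $\operatorname{rank}\mathbf A^{k+1}=\operatorname{rank}\mathbf A^{k}$; the Drazin inverse $\mathbf A^{D}$ is the unique $\mathbf X$ with $\mathbf A^{k+1}\mathbf X=\mathbf A^{k}$, $\mathbf X\mathbf A\mathbf X=\mathbf X$, $\mathbf A\mathbf X=\mathbf X\mathbf A$. $\mathbf M_{.i}(\mathbf c)$ denotes $\mathbf M$ with its $i$-th column replaced by $\mathbf c$. $J_{r,n}$ is the set of strictly increasing sequences of $r$ elements of $\{1,\dots,n\}$, $J_{r,n}\{i\}=\{\beta\in J_{r,n}:i\in\beta\}$, $\mathbf M^{\beta}_{\beta}$ is the principal submatrix indexed by $\beta$, $|\cdot|$ is the determinant. *)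

theory Defs
  imports "Jordan_Normal_Form.DL_Rank_Submatrix" "Jordan_Normal_Form.Determinant"
begin

definition mrank :: "'a::field mat \<Rightarrow> nat" where
  "mrank A = vec_space.rank (dim_row A) A"

definition matrix_index :: "'a::field mat \<Rightarrow> nat" where
  "matrix_index A = (LEAST k. mrank (A ^\<^sub>m (k+1)) = mrank (A ^\<^sub>m k))"

definition drazin :: "'a::field mat \<Rightarrow> 'a mat" where
  "drazin A = (THE X. X \<in> carrier_mat (dim_row A) (dim_row A) \<and>
      A ^\<^sub>m (matrix_index A + 1) * X = A ^\<^sub>m (matrix_index A) \<and>
      X * A * X = X \<and> A * X = X * A)"

definition mat_col_replace :: "'a mat \<Rightarrow> nat \<Rightarrow> 'a vec \<Rightarrow> 'a mat" where
  "mat_col_replace M i c = mat (dim_row M) (dim_col M) (\<lambda>(a,b). if b = i then c $ a else M $$ (a,b))"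

text \<open>J_{r,n}: strictly increasing r-sequences in {0..<n}, represented as r-element subsets.\<close>
definition Jrn :: "nat \<Rightarrow> nat \<Rightarrow> nat set set" where
  "Jrn r n = {\<beta>. \<beta> \<subseteq> {0..<n} \<and> card \<beta> = r}"

end

theory Submission
  imports Defs "Jordan_Normal_Form.Matrix_Kernel" "Jordan_Normal_Form.Jordan_Normal_Form_Uniqueness" "Jordan_Normal_Form.Jordan_Normal_Form_Existence"
begin

lemma Jrn_D: assumes "\<beta> \<in> Jrn r n" shows "\<beta> \<subseteq> {0..<n}" "card \<beta> = r" "finite \<beta>"
  using assms unfolding Jrn_def by (auto intro: finite_subset)
lemma Jrn_restrict: assumes "\<beta> \<in> Jrn r n" shows "{j. j < n \<and> j \<in> \<beta>} = \<beta>"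
  using Jrn_D[OF assms] by auto
lemma finite_Jrn: "finite (Jrn r n)"
proof -
  have "Jrn r n \<subseteq> Pow {0..<n}" unfolding Jrn_def by auto
  thus ?thesis by (rule finite_subset) auto
qed
lemma pick_lt_card_in: assumes "i < card \<beta>" shows "pick \<beta> i \<in> \<beta>"
  using pick_in_set assms by auto
lemma pick_inj: assumes "i < card \<beta>" "j < card \<beta>" "pick \<beta> i = pick \<beta> j" shows "i = j"
proof (rule ccontr)
  assume "i \<noteq> j"
  hence "i < j \<or> j < i" by arith
  thus False
  proof
    assume "i < j" thus False using pick_mono[of j \<beta> i] assms by auto
  next
    assume "j < i" thus False using pick_mono[of i \<beta> j] assms by auto
  qed
qed
lemma pick_surj: assumes "finite \<beta>" "x \<in> \<beta>"
  shows "card {a\<in>\<beta>. a < x} < card \<beta>" "pick \<beta> (card {a\<in>\<beta>. a < x}) = x"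
proof -
  have "{a\<in>\<beta>. a < x} \<subset> \<beta>" using assms by auto
  thus "card {a\<in>\<beta>. a < x} < card \<beta>" using assms(1) by (simp add: psubset_card_mono)
  show "pick \<beta> (card {a\<in>\<beta>. a < x}) = x" using pick_card_in_set[OF assms(2)] .
qed
lemma pick_image: assumes "finite \<beta>" shows "pick \<beta> ` {0..<card \<beta>} = \<beta>"
proof
  show "pick \<beta> ` {0..<card \<beta>} \<subseteq> \<beta>" using pick_lt_card_in by auto
  show "\<beta> \<subseteq> pick \<beta> ` {0..<card \<beta>}"
  proof
    fix x assume "x \<in> \<beta>"
    from pick_surj[OF assms this] show "x \<in> pick \<beta> ` {0..<card \<beta>}"
      by force
  qed
qed
lemma t2:
  fixes G F :: "'a::comm_ring_1 mat"
  assumes G: "G \<in> carrier_mat r n" and F: "F \<in> carrier_mat n r" and f: "\<forall>i<r. f i < n"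
  shows "det (mat\<^sub>r r r (\<lambda>i. G $$ (i, f i) \<cdot>\<^sub>v row F (f i))) = (\<Prod>i\<in>{0..<r}. G $$ (i, f i)) * det (mat\<^sub>r r r (\<lambda>i. row F (f i)))"
  by (rule det_rows_mul, insert f F, auto)
lemma t3:
  fixes F :: "'a::comm_ring_1 mat"
  assumes F: "F \<in> carrier_mat n r" and f: "\<forall>i<r. f i < n" and ni: "\<not> inj_on f {0..<r}"
  shows "det (mat\<^sub>r r r (\<lambda>i. row F (f i))) = 0"
proof -
  from ni obtain i j where ij: "f i = f j" "i \<noteq> j" "i < r" "j < r"
      unfolding inj_on_def by auto
  show ?thesis
      by (rule det_identical_rows[OF _ ij(2-4)], insert ij, auto)
qed

lemma cb_step1:
  fixes G F :: "'a::comm_ring_1 mat"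
  assumes G: "G \<in> carrier_mat r n" and F: "F \<in> carrier_mat n r"
  shows "det (G * F) = (\<Sum>f\<in>{f. (\<forall>i\<in>{0..<r}. f i \<in> {0..<n}) \<and> (\<forall>i. i \<notin> {0..<r} \<longrightarrow> f i = i)}.
      det (mat\<^sub>r r r (\<lambda>i. G $$ (i, f i) \<cdot>\<^sub>v row F (f i))))"
    unfolding mat_mul_finsum_alt[OF G F]
    by (rule det_linear_rows_sum, insert G F, auto)

lemma cb_step2:
  fixes G F :: "'a::comm_ring_1 mat"
  assumes G: "G \<in> carrier_mat r n" and F: "F \<in> carrier_mat n r"
  shows "det (G * F) = (\<Sum>f\<in>{f. (\<forall>i\<in>{0..<r}. f i \<in> {0..<n}) \<and> (\<forall>i. i \<notin> {0..<r} \<longrightarrow> f i = i) \<and> inj_on f {0..<r}}.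
      (\<Prod>i\<in>{0..<r}. G $$ (i, f i)) * det (mat\<^sub>r r r (\<lambda>i. row F (f i))))"
proof -
  define FF where "FF = {f. (\<forall>i\<in>{0..<r}. f i \<in> {0..<n}) \<and> (\<forall>i. i \<notin> {0..<r} \<longrightarrow> f i = i)}"
  define II where "II = {f. (\<forall>i\<in>{0..<r}. f i \<in> {0..<n}) \<and> (\<forall>i. i \<notin> {0..<r} \<longrightarrow> f i = i) \<and> inj_on f {0..<r}}"
  define h where "h = (\<lambda>f. (\<Prod>i\<in>{0..<r}. G $$ (i, f i)) * det (mat\<^sub>r r r (\<lambda>i. row F (f i))))"
  have fF: "finite FF" unfolding FF_def by (rule finite_bounded_functions, auto)
  have sub: "II \<subseteq> FF" unfolding II_def FF_def by blast
  have "det (G * F) = sum h FF"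
    unfolding cb_step1[OF G F, folded FF_def] h_def
    by (rule sum.cong[OF refl], rule t2[OF G F], auto simp: FF_def)
  also have "\<dots> = sum h II + sum h (FF - II)"
    using sum.subset_diff[OF sub fF, of h] by (simp add: add.commute)
  also have "sum h (FF - II) = 0"
  proof (rule sum.neutral, rule ballI)
    fix f assume "f \<in> FF - II"
    hence "\<forall>i<r. f i < n" "\<not> inj_on f {0..<r}" unfolding FF_def II_def by auto
    thus "h f = 0" unfolding h_def using t3[OF F] by simp
  qed
  finally show ?thesis unfolding II_def h_def by simp
qed


definition cbPhi :: "nat \<Rightarrow> nat set \<Rightarrow> (nat \<Rightarrow> nat) \<Rightarrow> nat \<Rightarrow> nat" where
  "cbPhi r \<beta> \<pi> = (\<lambda>i. if i < r then pick \<beta> (\<pi> i) else i)"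

lemma cb_Phi_in: assumes b: "\<beta> \<in> Jrn r n" and p: "\<pi> permutes {0..<r}"
  shows "cbPhi r \<beta> \<pi> \<in> {f. (\<forall>i\<in>{0..<r}. f i \<in> {0..<n}) \<and> (\<forall>i. i \<notin> {0..<r} \<longrightarrow> f i = i) \<and> inj_on f {0..<r}}"
proof -
  note bb = Jrn_D[OF b]
  have pi: "i < r \<Longrightarrow> \<pi> i < r" for i using permutes_in_image[OF p] by auto
  have A: "\<forall>i\<in>{0..<r}. cbPhi r \<beta> \<pi> i \<in> {0..<n}"
  proof
    fix i assume "i \<in> {0..<r}"
    hence "pick \<beta> (\<pi> i) \<in> \<beta>" using pick_lt_card_in[of "\<pi> i" \<beta>] pi bb by auto
    thus "cbPhi r \<beta> \<pi> i \<in> {0..<n}" using bb \<open>i \<in> {0..<r}\<close> by (auto simp: cbPhi_def)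
  qed
  have B: "inj_on (cbPhi r \<beta> \<pi>) {0..<r}"
  proof (rule inj_onI)
    fix i j assume ij: "i \<in> {0..<r}" "j \<in> {0..<r}" and e: "cbPhi r \<beta> \<pi> i = cbPhi r \<beta> \<pi> j"
    hence "pick \<beta> (\<pi> i) = pick \<beta> (\<pi> j)" by (auto simp: cbPhi_def)
    hence "\<pi> i = \<pi> j" using pick_inj[of "\<pi> i" \<beta> "\<pi> j"] pi ij bb by auto
    thus "i = j" using permutes_inj[OF p] by (auto dest: injD)
  qed
  show ?thesis using A B by (auto simp: cbPhi_def)
qed

lemma cb_Phi_inj: assumes b: "\<beta> \<in> Jrn r n" and p: "\<pi> permutes {0..<r}"
  and b': "\<beta>' \<in> Jrn r n" and p': "\<pi>' permutes {0..<r}" and e: "cbPhi r \<beta> \<pi> = cbPhi r \<beta>' \<pi>'"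
  shows "\<beta> = \<beta>' \<and> \<pi> = \<pi>'"
proof -
  note bb = Jrn_D[OF b] and bb' = Jrn_D[OF b']
  have e2: "pick \<beta> (\<pi> i) = pick \<beta>' (\<pi>' i)" if "i < r" for i
    using fun_cong[OF e, of i] that by (simp add: cbPhi_def)
  have "\<beta> = pick \<beta> ` \<pi> ` {0..<r}" using pick_image[OF bb(3)] permutes_image[OF p] bb by simp
  also have "\<dots> = pick \<beta>' ` \<pi>' ` {0..<r}" using e2 by (force simp: image_image)
  also have "\<dots> = \<beta>'" using pick_image[OF bb'(3)] permutes_image[OF p'] bb' by simp
  finally have beq: "\<beta> = \<beta>'" .
  have "\<pi> i = \<pi>' i" for i
  proof (cases "i < r")
    case True
    have "\<pi> i < r" "\<pi>' i < r" using True permutes_in_image[OF p] permutes_in_image[OF p'] by auto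
    then show ?thesis using pick_inj[of "\<pi> i" \<beta> "\<pi>' i"] e2[OF True] beq bb by auto
  next
    case False
    then show ?thesis using permutes_not_in[OF p] permutes_not_in[OF p'] by auto
  qed
  thus ?thesis using beq by auto
qed

lemma cb_Phi_onto: assumes f: "f \<in> {f. (\<forall>i\<in>{0..<r}. f i \<in> {0..<n}) \<and> (\<forall>i. i \<notin> {0..<r} \<longrightarrow> f i = i) \<and> inj_on f {0..<r}}"
  shows "\<exists>\<beta> \<pi>. \<beta> \<in> Jrn r n \<and> \<pi> permutes {0..<r} \<and> f = cbPhi r \<beta> \<pi>"
proof -
  define \<beta> where "\<beta> = f ` {0..<r}"
  have fin: "finite \<beta>" unfolding \<beta>_def by auto
  have cb: "card \<beta> = r" unfolding \<beta>_def using f by (auto simp: card_image)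
  have b: "\<beta> \<in> Jrn r n" using f cb unfolding \<beta>_def Jrn_def by auto
  define \<pi> where "\<pi> = (\<lambda>i. if i < r then card {a\<in>\<beta>. a < f i} else i)"
  have fb: "i < r \<Longrightarrow> f i \<in> \<beta>" for i unfolding \<beta>_def by auto
  have pk: "i < r \<Longrightarrow> pick \<beta> (\<pi> i) = f i" for i
    unfolding \<pi>_def using pick_surj(2)[OF fin fb] by auto
  have p: "\<pi> permutes {0..<r}"
  proof (rule inj_on_nat_permutes)
    show "inj_on \<pi> {0..<r}"
    proof (rule inj_onI)
      fix i j assume ij: "i \<in> {0..<r}" "j \<in> {0..<r}" "\<pi> i = \<pi> j"
      hence "f i = f j" using pk[of i] pk[of j] by auto
      thus "i = j" using f ij by (auto dest: inj_onD)
    qed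
    show "\<pi> \<in> {0..<r} \<rightarrow> {0..<r}" unfolding \<pi>_def using pick_surj(1)[OF fin fb] cb by auto
  qed (auto simp: \<pi>_def)
  have "f = cbPhi r \<beta> \<pi>"
  proof
    fix i show "f i = cbPhi r \<beta> \<pi> i"
      using pk f by (cases "i < r", auto simp: cbPhi_def)
  qed
  thus ?thesis using b p by blast
qed


lemma cauchy_binet:
  fixes G F :: "'a::comm_ring_1 mat"
  assumes G: "G \<in> carrier_mat r n" and F: "F \<in> carrier_mat n r"
  shows "det (G * F) = (\<Sum>\<beta>\<in>Jrn r n. det (submatrix G UNIV \<beta>) * det (submatrix F \<beta> UNIV))"
proof -
  define II where "II = {f. (\<forall>i\<in>{0..<r}. f i \<in> {0..<n}) \<and> (\<forall>i. i \<notin> {0..<r} \<longrightarrow> f i = i) \<and> inj_on f {0..<r}}"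
  define h where "h = (\<lambda>f. (\<Prod>i\<in>{0..<r}. G $$ (i, f i)) * det (mat\<^sub>r r r (\<lambda>i. row F (f i))))"
  define S where "S = (SIGMA \<beta>:Jrn r n. {\<pi>. \<pi> permutes {0..<r}})"
  define \<Phi> where "\<Phi> = (\<lambda>(\<beta>,\<pi>). cbPhi r \<beta> \<pi>)"
  have inj: "inj_on \<Phi> S"
  proof (rule inj_onI)
    fix x y assume x: "x \<in> S" and y: "y \<in> S" and e: "\<Phi> x = \<Phi> y"
    obtain \<beta> \<pi> where xx: "x = (\<beta>,\<pi>)" by (cases x)
    obtain \<beta>' \<pi>' where yy: "y = (\<beta>',\<pi>')" by (cases y)
    have "\<beta> \<in> Jrn r n" "\<pi> permutes {0..<r}" using x unfolding xx S_def by auto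
    moreover have "\<beta>' \<in> Jrn r n" "\<pi>' permutes {0..<r}" using y unfolding yy S_def by auto
    moreover have "cbPhi r \<beta> \<pi> = cbPhi r \<beta>' \<pi>'" using e unfolding xx yy \<Phi>_def by simp
    ultimately have "\<beta> = \<beta>' \<and> \<pi> = \<pi>'" by (rule cb_Phi_inj)
    thus "x = y" unfolding xx yy by simp
  qed
  have img: "\<Phi> ` S = II"
  proof
    show "\<Phi> ` S \<subseteq> II"
    proof
      fix f assume "f \<in> \<Phi> ` S"
      then obtain x where x: "x \<in> S" and f: "f = \<Phi> x" by blast
      obtain \<beta> \<pi> where xx: "x = (\<beta>,\<pi>)" by (cases x)
      have "\<beta> \<in> Jrn r n" "\<pi> permutes {0..<r}" using x unfolding xx S_def by auto
      from cb_Phi_in[OF this] show "f \<in> II" unfolding f xx \<Phi>_def II_def by simp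
    qed
    show "II \<subseteq> \<Phi> ` S"
    proof
      fix f assume "f \<in> II"
      then obtain \<beta> \<pi> where "\<beta> \<in> Jrn r n" "\<pi> permutes {0..<r}" "f = cbPhi r \<beta> \<pi>"
        using cb_Phi_onto unfolding II_def by blast
      hence "(\<beta>,\<pi>) \<in> S" "f = \<Phi> (\<beta>,\<pi>)" unfolding S_def \<Phi>_def by auto
      thus "f \<in> \<Phi> ` S" by blast
    qed
  qed
  have "det (G * F) = sum h II" unfolding cb_step2[OF G F] II_def h_def ..
  also have "\<dots> = sum (h \<circ> \<Phi>) S"
    by (subst img[symmetric], rule sum.reindex[OF inj])
  also have "\<dots> = (\<Sum>x\<in>S. h (cbPhi r (fst x) (snd x)))"
    by (rule sum.cong[OF refl], simp add: \<Phi>_def split_beta)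
  also have "\<dots> = (\<Sum>\<beta>\<in>Jrn r n. \<Sum>\<pi>\<in>{\<pi>. \<pi> permutes {0..<r}}. h (cbPhi r \<beta> \<pi>))"
  proof -
    have fin: "\<forall>\<beta>\<in>Jrn r n. finite {\<pi>. \<pi> permutes {0..<r}}" using finite_permutations[of "{0..<r}"] by simp
    show ?thesis unfolding S_def sum.Sigma[OF finite_Jrn fin] by (simp add: split_beta)
  qed
  also have "\<dots> = (\<Sum>\<beta>\<in>Jrn r n. det (submatrix G UNIV \<beta>) * det (submatrix F \<beta> UNIV))"
  proof (rule sum.cong[OF refl])
    fix \<beta> assume b: "\<beta> \<in> Jrn r n"
    note bb = Jrn_D[OF b]
    let ?Gb = "submatrix G UNIV \<beta>" and ?Fb = "submatrix F \<beta> UNIV"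
    have dG: "dim_row G = r" "dim_col G = n" using G by auto
    have dF: "dim_row F = n" "dim_col F = r" using F by auto
    have c1: "card {i. i < dim_row G \<and> i \<in> UNIV} = r" unfolding dG by simp
    have c2: "card {j. j < dim_col G \<and> j \<in> \<beta>} = r" unfolding dG Jrn_restrict[OF b] by (rule bb(2))
    have c3: "card {i. i < dim_row F \<and> i \<in> \<beta>} = r" unfolding dF Jrn_restrict[OF b] by (rule bb(2))
    have c4: "card {j. j < dim_col F \<and> j \<in> UNIV} = r" unfolding dF by simp
    have Gb: "?Gb \<in> carrier_mat r r" unfolding carrier_mat_def using c1 c2 by (simp only: dim_submatrix mem_Collect_eq)
    have Fb: "?Fb \<in> carrier_mat r r" unfolding carrier_mat_def using c3 c4 by (simp only: dim_submatrix mem_Collect_eq)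
    have Gbi: "i < r \<Longrightarrow> j < r \<Longrightarrow> ?Gb $$ (i,j) = G $$ (i, pick \<beta> j)" for i j
      using submatrix_index[of i G UNIV j \<beta>] c1 c2 by (auto simp: pick_UNIV)
    have Fbi: "i < r \<Longrightarrow> j < r \<Longrightarrow> ?Fb $$ (i,j) = F $$ (pick \<beta> i, j)" for i j
      using submatrix_index[of i F \<beta> j UNIV] c3 c4 by (auto simp: pick_UNIV)
    have "(\<Sum>\<pi>\<in>{\<pi>. \<pi> permutes {0..<r}}. h (cbPhi r \<beta> \<pi>)) = (\<Sum>\<pi>\<in>{\<pi>. \<pi> permutes {0..<r}}. signof \<pi> * (\<Prod>i\<in>{0..<r}. ?Gb $$ (i, \<pi> i)) * det ?Fb)"
    proof (rule sum.cong[OF refl])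
      fix \<pi> assume "\<pi> \<in> {\<pi>. \<pi> permutes {0..<r}}"
      hence p: "\<pi> permutes {0..<r}" by auto
      have pi: "i < r \<Longrightarrow> \<pi> i < r" for i using permutes_in_image[OF p] by auto
      have pk: "i < r \<Longrightarrow> pick \<beta> (\<pi> i) < n" for i using pick_lt_card_in[of "\<pi> i" \<beta>] pi bb by auto
      have "(\<Prod>i\<in>{0..<r}. G $$ (i, cbPhi r \<beta> \<pi> i)) = (\<Prod>i\<in>{0..<r}. ?Gb $$ (i, \<pi> i))"
        by (rule prod.cong, insert Gbi pi, auto simp: cbPhi_def)
      moreover have "mat\<^sub>r r r (\<lambda>i. row F (cbPhi r \<beta> \<pi> i)) = mat r r (\<lambda>(i,j). ?Fb $$ (\<pi> i, j))"
        by (rule eq_matI, insert F Fbi pi pk, auto simp: cbPhi_def)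
      moreover have "det (mat r r (\<lambda>(i,j). ?Fb $$ (\<pi> i, j))) = signof \<pi> * det ?Fb"
        by (rule det_permute_rows[OF Fb p])
      ultimately show "h (cbPhi r \<beta> \<pi>) = signof \<pi> * (\<Prod>i\<in>{0..<r}. ?Gb $$ (i, \<pi> i)) * det ?Fb"
        unfolding h_def by (simp add: ac_simps)
    qed
    also have "\<dots> = det ?Gb * det ?Fb"
      unfolding det_def'[OF Gb] by (simp add: sum_distrib_right)
    finally show "(\<Sum>\<pi>\<in>{\<pi>. \<pi> permutes {0..<r}}. h (cbPhi r \<beta> \<pi>)) = det ?Gb * det ?Fb" .
  qed
  finally show ?thesis .
qed


lemma rank_one_det:
  fixes u v :: "'a::field vec"
  assumes u: "u \<in> carrier_vec r" and v: "v \<in> carrier_vec r"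
  shows "det (1\<^sub>m r + mat r r (\<lambda>(a,b). u $ a * v $ b)) = 1 + v \<bullet> u"
proof -
  define X where "X = 1\<^sub>m r + mat r r (\<lambda>(a,b). u $ a * v $ b)"
  define U where "U = mat r 1 (\<lambda>(a,_). u $ a)"
  define V where "V = mat 1 r (\<lambda>(_,b). v $ b)"
  have X: "X \<in> carrier_mat r r" unfolding X_def by simp
  have U: "U \<in> carrier_mat r 1" unfolding U_def by simp
  have V: "V \<in> carrier_mat 1 r" unfolding V_def by simp
  have UV: "U * V = mat r r (\<lambda>(a,b). u $ a * v $ b)"
    by (rule eq_matI, auto simp: U_def V_def scalar_prod_def)
  have VU: "V * U = mat 1 1 (\<lambda>_. v \<bullet> u)"
    by (rule eq_matI, insert u v, auto simp: U_def V_def scalar_prod_def)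
  define c where "c = mat 1 1 (\<lambda>_. 1 + v \<bullet> u)"
  have c: "c \<in> carrier_mat 1 1" unfolding c_def by simp
  define L where "L = four_block_mat (1\<^sub>m 1) (0\<^sub>m 1 r) U (1\<^sub>m r)"
  define T where "T = four_block_mat (1\<^sub>m 1) (- V) (0\<^sub>m r 1) X"
  define T' where "T' = four_block_mat c (- V) (0\<^sub>m r 1) (1\<^sub>m r)"
  have L: "L \<in> carrier_mat (1+r) (1+r)" unfolding L_def by (rule four_block_carrier_mat) simp_all
  have T: "T \<in> carrier_mat (1+r) (1+r)" unfolding T_def using X by (intro four_block_carrier_mat) simp_all
  have T': "T' \<in> carrier_mat (1+r) (1+r)" unfolding T'_def using c by (intro four_block_carrier_mat) simp_all
  have "L * T = four_block_mat (1\<^sub>m 1 * 1\<^sub>m 1 + 0\<^sub>m 1 r * 0\<^sub>m r 1) (1\<^sub>m 1 * - V + 0\<^sub>m 1 r * X)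
      (U * 1\<^sub>m 1 + 1\<^sub>m r * 0\<^sub>m r 1) (U * - V + 1\<^sub>m r * X)"
    unfolding L_def T_def by (rule mult_four_block_mat, insert U V X, auto)
  also have "\<dots> = four_block_mat (1\<^sub>m 1) (- V) U (1\<^sub>m r)"
  proof -
    have "U * - V + 1\<^sub>m r * X = 1\<^sub>m r"
    proof -
      have "U * - V = - (U * V)" using U V by simp
      hence "U * - V + 1\<^sub>m r * X = - (U * V) + (1\<^sub>m r + U * V)" using X unfolding X_def UV by simp
      also have "\<dots> = 1\<^sub>m r" using U V by (intro eq_matI, auto)
      finally show ?thesis .
    qed
    thus ?thesis using U V X by simp
  qed
  finally have LT: "L * T = four_block_mat (1\<^sub>m 1) (- V) U (1\<^sub>m r)" .
  have "T' * L = four_block_mat (c * 1\<^sub>m 1 + - V * U) (c * 0\<^sub>m 1 r + - V * 1\<^sub>m r)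
      (0\<^sub>m r 1 * 1\<^sub>m 1 + 1\<^sub>m r * U) (0\<^sub>m r 1 * 0\<^sub>m 1 r + 1\<^sub>m r * 1\<^sub>m r)"
    unfolding L_def T'_def by (rule mult_four_block_mat, insert U V c, auto)
  also have "\<dots> = four_block_mat (1\<^sub>m 1) (- V) U (1\<^sub>m r)"
  proof -
    have "c * 1\<^sub>m 1 + - V * U = 1\<^sub>m 1"
    proof -
      have "- V * U = - (V * U)" using U V by simp
      thus ?thesis unfolding VU using c by (auto simp: c_def)
    qed
    thus ?thesis using U V c by simp
  qed
  finally have TL: "T' * L = four_block_mat (1\<^sub>m 1) (- V) U (1\<^sub>m r)" .
  have dL: "det L = 1" unfolding L_def
    by (subst det_four_block_mat_upper_right_zero[OF _ refl U], auto)
  have dT: "det T = det X" unfolding T_def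
    by (subst det_four_block_mat_lower_left_zero[OF _ _ refl X], insert V, auto)
  have dT': "det T' = 1 + v \<bullet> u" unfolding T'_def
    by (subst det_four_block_mat_lower_left_zero[OF c _ refl], insert V, auto simp: c_def det_single)
  have "det L * det T = det T' * det L"
    using det_mult[OF L T] det_mult[OF T' L] LT TL by simp
  thus ?thesis using dL dT dT' unfolding X_def by simp
qed


lemma submatrix_mult:
  assumes X: "X \<in> carrier_mat a m" and Y: "Y \<in> carrier_mat m b"
  shows "submatrix (X * Y) I J = submatrix X I UNIV * submatrix Y UNIV J"
proof -
  have dX: "dim_row X = a" "dim_col X = m" using X by auto
  have dY: "dim_row Y = m" "dim_col Y = b" using Y by auto
  have cm: "card {j. j < m \<and> j \<in> (UNIV::nat set)} = m" by simp
  show ?thesis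
  proof (rule eq_matI)
    show "dim_row (submatrix (X * Y) I J) = dim_row (submatrix X I UNIV * submatrix Y UNIV J)"
      by (simp add: dim_submatrix dX)
    show "dim_col (submatrix (X * Y) I J) = dim_col (submatrix X I UNIV * submatrix Y UNIV J)"
      by (simp add: dim_submatrix dY)
    fix i j assume i: "i < dim_row (submatrix X I UNIV * submatrix Y UNIV J)"
      and j: "j < dim_col (submatrix X I UNIV * submatrix Y UNIV J)"
    have i': "i < card {i. i < a \<and> i \<in> I}" using i by (simp add: dim_submatrix dX)
    have j': "j < card {j. j < b \<and> j \<in> J}" using j by (simp add: dim_submatrix dY)
    have pi: "pick I i < a" using pick_le[OF i'] .
    have pj: "pick J j < b" using pick_le[OF j'] .
    have "submatrix (X * Y) I J $$ (i, j) = (X * Y) $$ (pick I i, pick J j)"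
      by (rule submatrix_index, insert i' j' dX dY, auto)
    also have "\<dots> = (\<Sum>l<m. X $$ (pick I i, l) * Y $$ (l, pick J j))"
      using pi pj dX dY by (simp add: scalar_prod_def atLeast0LessThan)
    also have "\<dots> = (submatrix X I UNIV * submatrix Y UNIV J) $$ (i, j)"
    proof -
      have "(submatrix X I UNIV * submatrix Y UNIV J) $$ (i, j)
          = row (submatrix X I UNIV) i \<bullet> col (submatrix Y UNIV J) j" using i j by simp
      also have "\<dots> = (\<Sum>l<m. submatrix X I UNIV $$ (i, l) * submatrix Y UNIV J $$ (l, j))"
        using i j by (simp add: scalar_prod_def dim_submatrix dX dY atLeast0LessThan)
      also have "\<dots> = (\<Sum>l<m. X $$ (pick I i, l) * Y $$ (l, pick J j))"
      proof (rule sum.cong[OF refl])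
        fix l assume l: "l \<in> {..<m}"
        have "submatrix X I UNIV $$ (i, l) = X $$ (pick I i, pick UNIV l)"
          by (rule submatrix_index, insert i' l dX, auto)
        moreover have "submatrix Y UNIV J $$ (l, j) = Y $$ (pick UNIV l, pick J j)"
          by (rule submatrix_index, insert j' l dY, auto)
        ultimately show "submatrix X I UNIV $$ (i, l) * submatrix Y UNIV J $$ (l, j) = X $$ (pick I i, l) * Y $$ (l, pick J j)"
          by (simp add: pick_UNIV)
      qed
      finally show ?thesis by simp
    qed
    finally show "submatrix (X * Y) I J $$ (i, j) = (submatrix X I UNIV * submatrix Y UNIV J) $$ (i, j)" .
  qed
qed

lemma col_replace_mult:
  assumes X: "X \<in> carrier_mat a m" and Y: "Y \<in> carrier_mat m b" and j: "j < b"
  shows "mat_col_replace (X * Y) i (col (X * Y) j) = X * mat_col_replace Y i (col Y j)"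
proof (rule eq_matI)
  fix p q assume p: "p < dim_row (X * mat_col_replace Y i (col Y j))" and q: "q < dim_col (X * mat_col_replace Y i (col Y j))"
  have p': "p < a" and q': "q < b" using p q X Y by (auto simp: mat_col_replace_def)
  show "mat_col_replace (X * Y) i (col (X * Y) j) $$ (p, q) = (X * mat_col_replace Y i (col Y j)) $$ (p, q)"
  proof (cases "q = i")
    case True
    have "col (mat_col_replace Y i (col Y j)) q = col Y j"
      by (rule eq_vecI, insert True q' j Y, auto simp: mat_col_replace_def)
    thus ?thesis using True p' q' j X Y by (simp add: mat_col_replace_def)
  next
    case False
    have "col (mat_col_replace Y i (col Y j)) q = col Y q"
      by (rule eq_vecI, insert False q' j Y, auto simp: mat_col_replace_def)
    thus ?thesis using False p' q' j X Y by (simp add: mat_col_replace_def)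
  qed
qed (insert X Y, auto simp: mat_col_replace_def)


lemma submatrix_UNIV_UNIV: "submatrix X UNIV UNIV = X"
  by (rule eq_matI, auto simp: dim_submatrix submatrix_index pick_UNIV)

lemma submatrix_mult_left:
  assumes X: "X \<in> carrier_mat a m" and Y: "Y \<in> carrier_mat m b"
  shows "submatrix (X * Y) UNIV J = X * submatrix Y UNIV J"
  using submatrix_mult[OF X Y, of UNIV J] by (simp add: submatrix_UNIV_UNIV)

lemma submatrix_carrier_Jrn:
  assumes b: "\<beta> \<in> Jrn r n"
  shows "X \<in> carrier_mat n m \<Longrightarrow> submatrix X \<beta> UNIV \<in> carrier_mat r m"
    and "Y \<in> carrier_mat m n \<Longrightarrow> submatrix Y UNIV \<beta> \<in> carrier_mat m r"
proof -
  assume X: "X \<in> carrier_mat n m"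
  have "card {i. i < dim_row X \<and> i \<in> \<beta>} = r" using X Jrn_restrict[OF b] Jrn_D(2)[OF b] by simp
  moreover have "card {j. j < dim_col X \<and> j \<in> (UNIV::nat set)} = m" using X by simp
  ultimately show "submatrix X \<beta> UNIV \<in> carrier_mat r m" unfolding carrier_mat_def
    by (simp only: dim_submatrix mem_Collect_eq)
next
  assume Y: "Y \<in> carrier_mat m n"
  have "card {i. i < dim_col Y \<and> i \<in> \<beta>} = r" using Y Jrn_restrict[OF b] Jrn_D(2)[OF b] by simp
  moreover have "card {j. j < dim_row Y \<and> j \<in> (UNIV::nat set)} = m" using Y by simp
  ultimately show "submatrix Y UNIV \<beta> \<in> carrier_mat m r" unfolding carrier_mat_def
    by (simp only: dim_submatrix mem_Collect_eq)
qed

lemma det_submatrix_prod: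
  fixes F Y :: "'a::comm_ring_1 mat"
  assumes F: "F \<in> carrier_mat n r" and Y: "Y \<in> carrier_mat r n" and b: "\<beta> \<in> Jrn r n"
  shows "det (submatrix (F * Y) \<beta> \<beta>) = det (submatrix F \<beta> UNIV) * det (submatrix Y UNIV \<beta>)"
  unfolding submatrix_mult[OF F Y]
  by (rule det_mult[OF submatrix_carrier_Jrn(1)[OF b F] submatrix_carrier_Jrn(2)[OF b Y]])

lemma sum_det_submatrix_prod:
  fixes F Y :: "'a::comm_ring_1 mat"
  assumes F: "F \<in> carrier_mat n r" and Y: "Y \<in> carrier_mat r n"
  shows "(\<Sum>\<beta>\<in>Jrn r n. det (submatrix (F * Y) \<beta> \<beta>)) = det (Y * F)"
  unfolding cauchy_binet[OF Y F]
  by (rule sum.cong[OF refl], subst det_submatrix_prod[OF F Y], auto)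

lemma hxF:
  fixes H F :: "'a::field mat"
  assumes F: "F \<in> carrier_mat n r" and H: "H \<in> carrier_mat r n" and HF: "H * F = 1\<^sub>m r"
    and i: "i < n" and x: "x \<in> carrier_vec r"
  shows "mat_col_replace H i x * F = 1\<^sub>m r + mat r r (\<lambda>(a,b). (x - col H i) $ a * (row F i) $ b)"
proof (rule eq_matI)
  fix a b assume a: "a < dim_row (1\<^sub>m r + mat r r (\<lambda>(a,b). (x - col H i) $ a * (row F i) $ b))"
    and b: "b < dim_col (1\<^sub>m r + mat r r (\<lambda>(a,b). (x - col H i) $ a * (row F i) $ b))"
  hence a: "a < r" and b: "b < r" by auto
  have "(mat_col_replace H i x * F) $$ (a,b) = (\<Sum>l<n. (if l = i then x $ a else H $$ (a,l)) * F $$ (l,b))"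
    using a b F H by (simp add: mat_col_replace_def scalar_prod_def atLeast0LessThan)
  also have "\<dots> = (\<Sum>l<n. H $$ (a,l) * F $$ (l,b) + (if l = i then (x $ a - H $$ (a,i)) * F $$ (i,b) else 0))"
    by (rule sum.cong, auto simp: algebra_simps)
  also have "\<dots> = (\<Sum>l<n. H $$ (a,l) * F $$ (l,b)) + (x $ a - H $$ (a,i)) * F $$ (i,b)"
    using i by (simp add: sum.distrib)
  also have "(\<Sum>l<n. H $$ (a,l) * F $$ (l,b)) = (H * F) $$ (a,b)"
    using a b F H by (simp add: scalar_prod_def atLeast0LessThan)
  also have "\<dots> = 1\<^sub>m r $$ (a,b)" using HF by simp
  finally show "(mat_col_replace H i x * F) $$ (a,b) = (1\<^sub>m r + mat r r (\<lambda>(a,b). (x - col H i) $ a * (row F i) $ b)) $$ (a,b)"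
    using a b i x F H by simp
qed (insert F H, auto simp: mat_col_replace_def)

lemma det_hxF:
  fixes H F :: "'a::field mat"
  assumes F: "F \<in> carrier_mat n r" and H: "H \<in> carrier_mat r n" and HF: "H * F = 1\<^sub>m r"
    and i: "i < n" and x: "x \<in> carrier_vec r"
  shows "det (mat_col_replace H i x * F) = 1 + row F i \<bullet> (x - col H i)"
  unfolding hxF[OF assms] by (rule rank_one_det, insert x H F i, auto)


lemma det_zero_col_submatrix:
  fixes H :: "'a::field mat"
  assumes H: "H \<in> carrier_mat r n" and b: "\<beta> \<in> Jrn r n" and i: "i \<in> \<beta>"
    and z: "\<And>a. a < r \<Longrightarrow> H $$ (a, i) = 0"
  shows "det (submatrix H UNIV \<beta>) = 0"
proof -
  let ?S = "submatrix H UNIV \<beta>"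
  have S: "?S \<in> carrier_mat r r" using submatrix_carrier_Jrn(2)[OF b H] .
  note bb = Jrn_D[OF b]
  define q where "q = card {a\<in>\<beta>. a < i}"
  have q: "q < r" and pq: "pick \<beta> q = i" using pick_surj[OF bb(3) i] bb unfolding q_def by auto
  have cr: "card {i. i < dim_row H \<and> i \<in> (UNIV::nat set)} = r" using H by simp
  have cc: "card {j. j < dim_col H \<and> j \<in> \<beta>} = r" using H Jrn_restrict[OF b] bb by simp
  have "?S = replace_col ?S (?S *\<^sub>v 0\<^sub>v r) q"
  proof (rule eq_matI)
    fix a c assume a: "a < dim_row (replace_col ?S (?S *\<^sub>v 0\<^sub>v r) q)" and c: "c < dim_col (replace_col ?S (?S *\<^sub>v 0\<^sub>v r) q)"
    hence a: "a < r" and c: "c < r" using S by (auto simp: replace_col_def)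
    show "?S $$ (a,c) = replace_col ?S (?S *\<^sub>v 0\<^sub>v r) q $$ (a,c)"
    proof (cases "c = q")
      case True
      have "?S $$ (a,c) = H $$ (pick UNIV a, pick \<beta> c)" by (rule submatrix_index, insert a c cr cc, auto)
      also have "\<dots> = 0" using True pq z a by (simp add: pick_UNIV)
      finally show ?thesis using True a c S by (simp add: replace_col_def)
    qed (insert a c S, auto simp: replace_col_def)
  qed (insert S, auto simp: replace_col_def)
  also have "det \<dots> = (0\<^sub>v r) $ q * det ?S" using cramer_lemma_mat[OF S _ q, of "0\<^sub>v r"] by simp
  finally show ?thesis using q by simp
qed

lemma sum_split_mem:
  "finite S \<Longrightarrow> (\<Sum>x\<in>S. f x) = (\<Sum>x\<in>{x\<in>S. i \<in> x}. f x) + (\<Sum>x\<in>{x\<in>S. i \<notin> x}. f x)"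
proof -
  assume "finite S"
  have "S = {x\<in>S. i \<in> x} \<union> {x\<in>S. i \<notin> x}" by blast
  moreover have "{x\<in>S. i \<in> x} \<inter> {x\<in>S. i \<notin> x} = {}" by blast
  ultimately show ?thesis using sum.union_disjoint[of "{x\<in>S. i \<in> x}" "{x\<in>S. i \<notin> x}" f] \<open>finite S\<close>
    by (metis (no_types, lifting) finite_Un)
qed

lemma main_identity:
  fixes F H C :: "'a::field mat"
  assumes F: "F \<in> carrier_mat n r" and H: "H \<in> carrier_mat r n" and C: "C \<in> carrier_mat r r"
    and HF: "H * F = 1\<^sub>m r" and i: "i < n" and j: "j < n"
  shows "(\<Sum>\<beta>\<in>{\<beta>\<in>Jrn r n. i \<in> \<beta>}. det (submatrix (mat_col_replace (F * C * H) i (col (F * C * H) j)) \<beta> \<beta>))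
          = det C * (F * H) $$ (i,j)"
    and "(\<Sum>\<beta>\<in>Jrn r n. det (submatrix (F * C * H) \<beta> \<beta>)) = det C"
proof -
  have CH: "C * H \<in> carrier_mat r n" using C H by simp
  have FCH: "F * C * H = F * (C * H)" using F C H by (simp add: assoc_mult_mat)
  show "(\<Sum>\<beta>\<in>Jrn r n. det (submatrix (F * C * H) \<beta> \<beta>)) = det C"
    unfolding FCH sum_det_submatrix_prod[OF F CH]
    using C H F HF by (simp add: assoc_mult_mat)
  define H' where "H' = mat_col_replace H i (col H j)"
  define H0 where "H0 = mat_col_replace H i (0\<^sub>v r)"
  have H': "H' \<in> carrier_mat r n" and H0: "H0 \<in> carrier_mat r n" using H by (auto simp: H'_def H0_def mat_col_replace_def)
  have rep: "mat_col_replace (F * C * H) i (col (F * C * H) j) = F * (C * H')"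
    unfolding FCH H'_def col_replace_mult[OF F CH j] col_replace_mult[OF C H j] ..
  let ?g = "\<lambda>Y \<beta>. det (submatrix F \<beta> UNIV) * det (submatrix Y UNIV \<beta>)"
  have numer: "(\<Sum>\<beta>\<in>{\<beta>\<in>Jrn r n. i \<in> \<beta>}. det (submatrix (mat_col_replace (F * C * H) i (col (F * C * H) j)) \<beta> \<beta>))
     = det C * (\<Sum>\<beta>\<in>{\<beta>\<in>Jrn r n. i \<in> \<beta>}. ?g H' \<beta>)"
    unfolding rep sum_distrib_left
  proof (rule sum.cong[OF refl])
    fix \<beta> assume "\<beta> \<in> {\<beta>\<in>Jrn r n. i \<in> \<beta>}"
    hence b: "\<beta> \<in> Jrn r n" by auto
    have "det (submatrix (F * (C * H')) \<beta> \<beta>) = det (submatrix F \<beta> UNIV) * det (submatrix (C * H') UNIV \<beta>)"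
      by (rule det_submatrix_prod[OF F _ b], insert C H', simp)
    also have "submatrix (C * H') UNIV \<beta> = C * submatrix H' UNIV \<beta>" by (rule submatrix_mult_left[OF C H'])
    also have "det \<dots> = det C * det (submatrix H' UNIV \<beta>)"
      by (rule det_mult[OF C submatrix_carrier_Jrn(2)[OF b H']])
    finally show "det (submatrix (F * (C * H')) \<beta> \<beta>) = det C * ?g H' \<beta>" by simp
  qed
  have gall: "(\<Sum>\<beta>\<in>Jrn r n. ?g Y \<beta>) = det (Y * F)" if Y: "Y \<in> carrier_mat r n" for Y
    unfolding cauchy_binet[OF Y F] by (simp add: mult.commute)
  have out: "(\<Sum>\<beta>\<in>{\<beta>\<in>Jrn r n. i \<notin> \<beta>}. ?g H' \<beta>) = (\<Sum>\<beta>\<in>{\<beta>\<in>Jrn r n. i \<notin> \<beta>}. ?g H0 \<beta>)"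
  proof (rule sum.cong[OF refl])
    fix \<beta> assume "\<beta> \<in> {\<beta>\<in>Jrn r n. i \<notin> \<beta>}"
    hence b: "\<beta> \<in> Jrn r n" and ib: "i \<notin> \<beta>" by auto
    note bb = Jrn_D[OF b]
    have cc: "card {j. j < n \<and> j \<in> \<beta>} = r" using Jrn_restrict[OF b] bb by simp
    have "submatrix H' UNIV \<beta> = submatrix H0 UNIV \<beta>"
    proof (rule eq_matI)
      fix a c assume a: "a < dim_row (submatrix H0 UNIV \<beta>)" and c: "c < dim_col (submatrix H0 UNIV \<beta>)"
      have a': "a < r" and c': "c < r" using a c submatrix_carrier_Jrn(2)[OF b H0] by auto
      have pc: "pick \<beta> c \<in> \<beta>" using pick_lt_card_in[of c \<beta>] c' bb by auto
      hence pn: "pick \<beta> c < n" "pick \<beta> c \<noteq> i" using bb ib by auto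
      have "submatrix H' UNIV \<beta> $$ (a,c) = H' $$ (a, pick \<beta> c)"
        using submatrix_index[of a H' UNIV c \<beta>] a' c' H' cc by (simp add: pick_UNIV)
      also have "\<dots> = H $$ (a, pick \<beta> c)" using pn a' H by (simp add: H'_def mat_col_replace_def)
      also have "\<dots> = H0 $$ (a, pick \<beta> c)" using pn a' H by (simp add: H0_def mat_col_replace_def)
      also have "\<dots> = submatrix H0 UNIV \<beta> $$ (a,c)"
        using submatrix_index[of a H0 UNIV c \<beta>] a' c' H0 cc by (simp add: pick_UNIV)
      finally show "submatrix H' UNIV \<beta> $$ (a,c) = submatrix H0 UNIV \<beta> $$ (a,c)" .
    qed (insert submatrix_carrier_Jrn(2)[OF b H0] submatrix_carrier_Jrn(2)[OF b H'], auto)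
    thus "?g H' \<beta> = ?g H0 \<beta>" by simp
  qed
  have in0: "(\<Sum>\<beta>\<in>{\<beta>\<in>Jrn r n. i \<in> \<beta>}. ?g H0 \<beta>) = 0"
  proof (rule sum.neutral, rule ballI)
    fix \<beta> assume "\<beta> \<in> {\<beta>\<in>Jrn r n. i \<in> \<beta>}"
    hence b: "\<beta> \<in> Jrn r n" and ib: "i \<in> \<beta>" by auto
    have "det (submatrix H0 UNIV \<beta>) = 0"
      by (rule det_zero_col_submatrix[OF H0 b ib], insert i H, auto simp: H0_def mat_col_replace_def)
    thus "?g H0 \<beta> = 0" by simp
  qed
  have "(\<Sum>\<beta>\<in>{\<beta>\<in>Jrn r n. i \<in> \<beta>}. ?g H' \<beta>) = det (H' * F) - (\<Sum>\<beta>\<in>{\<beta>\<in>Jrn r n. i \<notin> \<beta>}. ?g H' \<beta>)"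
    using gall[OF H'] sum_split_mem[OF finite_Jrn, of "?g H'" r n i] by (simp add: eq_diff_eq)
  also have "(\<Sum>\<beta>\<in>{\<beta>\<in>Jrn r n. i \<notin> \<beta>}. ?g H' \<beta>) = det (H0 * F)"
    using gall[OF H0] sum_split_mem[OF finite_Jrn, of "?g H0" r n i] in0 out by simp
  also have "det (H' * F) = 1 + row F i \<bullet> (col H j - col H i)"
    unfolding H'_def by (rule det_hxF[OF F H HF i], insert H, auto)
  also have "det (H0 * F) = 1 + row F i \<bullet> (0\<^sub>v r - col H i)"
    unfolding H0_def using det_hxF[OF F H HF i, of "0\<^sub>v r"] by simp
  also have "1 + row F i \<bullet> (col H j - col H i) - (1 + row F i \<bullet> (0\<^sub>v r - col H i)) = row F i \<bullet> col H j"
  proof -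
    have rf: "row F i \<in> carrier_vec r" using F i by simp
    have hj: "col H j \<in> carrier_vec r" and hi: "col H i \<in> carrier_vec r" using H by auto
    have "row F i \<bullet> (col H j - col H i) = row F i \<bullet> col H j - row F i \<bullet> col H i"
      by (rule scalar_prod_minus_distrib[OF rf hj hi])
    moreover have "row F i \<bullet> (0\<^sub>v r - col H i) = row F i \<bullet> 0\<^sub>v r - row F i \<bullet> col H i"
      by (rule scalar_prod_minus_distrib[OF rf _ hi], simp)
    moreover have "row F i \<bullet> 0\<^sub>v r = 0" using rf by simp
    ultimately show ?thesis by simp
  qed
  also have "row F i \<bullet> col H j = (F * H) $$ (i,j)" using F H i j by simp
  finally show "(\<Sum>\<beta>\<in>{\<beta>\<in>Jrn r n. i \<in> \<beta>}. det (submatrix (mat_col_replace (F * C * H) i (col (F * C * H) j)) \<beta> \<beta>))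
          = det C * (F * H) $$ (i,j)" unfolding numer by simp
qed


lemma rank_nullity_mat:
  fixes B :: "'a::field mat"
  assumes B: "B \<in> carrier_mat n n"
  shows "mrank B + kernel_dim B = n"
proof -
  interpret V: vec_space "TYPE('a)" n .
  interpret K: kernel n n B by (unfold_locales, rule B)
  define T where "T = (\<lambda>v. B *\<^sub>v v)"
  have hom: "T \<in> LinearCombinations.module_hom class_ring V.V V.V"
    unfolding LinearCombinations.module_hom_def T_def using B
    by (auto simp: mult_add_distrib_mat_vec mult_mat_vec module_vec_simps)
  interpret L: linear_map class_ring V.V V.V T
    by (intro linear_map.intro V.vectorspace_axioms mod_hom.intro mod_hom_axioms.intro hom V.module_axioms)
  have rn: "vectorspace.dim class_ring (V.vs L.imT) + vectorspace.dim class_ring (V.vs L.kerT) = V.dim"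
    by (rule L.rank_nullity, simp)
  have im: "L.imT = V.span (set (cols B))"
  proof -
    have cB: "set (cols B) \<subseteq> carrier_vec n" using B cols_dim by blast
    have "V.span (set (cols B)) = V.span_list (cols B)" using V.span_list_as_span[OF cB] by simp
    also have "\<dots> = T ` carrier_vec n"
    proof
      show "V.span_list (cols B) \<subseteq> T ` carrier_vec n"
      proof
        fix x assume "x \<in> V.span_list (cols B)"
        then obtain c where x: "x = V.lincomb_list c (cols B)" unfolding V.span_list_def by auto
        also have "\<dots> = mat_of_cols n (cols B) *\<^sub>v vec (length (cols B)) c"
          by (rule V.lincomb_list_as_mat_mult, insert cB, auto)
        also have "mat_of_cols n (cols B) = B" using B mat_of_cols_cols[of B] by simp
        finally show "x \<in> T ` carrier_vec n" unfolding T_def using B by auto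
      qed
      show "T ` carrier_vec n \<subseteq> V.span_list (cols B)"
      proof
        fix x assume "x \<in> T ` carrier_vec n"
        then obtain v where v: "v \<in> carrier_vec n" and x: "x = B *\<^sub>v v" unfolding T_def by auto
        have "V.lincomb_list (\<lambda>i. v $ i) (cols B) = mat_of_cols n (cols B) *\<^sub>v vec (length (cols B)) (\<lambda>i. v $ i)"
          by (rule V.lincomb_list_as_mat_mult, insert cB, auto)
        also have "\<dots> = B *\<^sub>v v"
        proof -
          have "mat_of_cols n (cols B) = B" using B mat_of_cols_cols[of B] by simp
          moreover have "vec (length (cols B)) (\<lambda>i. v $ i) = v" using B v by (intro eq_vecI, auto)
          ultimately show ?thesis by simp
        qed
        finally have "x = V.lincomb_list (\<lambda>i. v $ i) (cols B)" using x by simp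
        thus "x \<in> V.span_list (cols B)" unfolding V.span_list_def by auto
      qed
    qed
    finally show ?thesis unfolding L.im_def by simp
  qed
  have ker: "L.kerT = mat_kernel B"
  proof -
    have "L.kerT = {v. v \<in> carrier V.V \<and> T v = \<zero>\<^bsub>V.V\<^esub>}" by (rule L.ker_def)
    thus ?thesis unfolding mat_kernel_def T_def using B by auto
  qed
  have "mrank B = vectorspace.dim class_ring (V.vs L.imT)"
    unfolding mrank_def im using B by (simp add: V.rank_def)
  moreover have "kernel_dim B = vectorspace.dim class_ring (V.vs L.kerT)"
    unfolding ker using B by (simp add: kernel_dim_def)
  moreover have "V.dim = n" by (rule V.dim_is_n)
  ultimately show ?thesis using rn by simp
qed


lemma block_diag_assoc:
  assumes X: "X \<in> carrier_mat a a" and Y: "Y \<in> carrier_mat b b" and Z: "Z \<in> carrier_mat c c"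
  shows "four_block_mat X (0\<^sub>m a (b+c)) (0\<^sub>m (b+c) a) (four_block_mat Y (0\<^sub>m b c) (0\<^sub>m c b) Z)
       = four_block_mat (four_block_mat X (0\<^sub>m a b) (0\<^sub>m b a) Y) (0\<^sub>m (a+b) c) (0\<^sub>m c (a+b)) Z"
  by (rule eq_matI, insert X Y Z, auto)

lemma block_diag_swap:
  fixes X Y :: "'a::comm_ring_1 mat"
  assumes X: "X \<in> carrier_mat a a" and Y: "Y \<in> carrier_mat b b"
  shows "similar_mat (four_block_mat X (0\<^sub>m a b) (0\<^sub>m b a) Y) (four_block_mat Y (0\<^sub>m b a) (0\<^sub>m a b) X)"
proof -
  define P :: "'a mat" where "P = four_block_mat (0\<^sub>m a b) (1\<^sub>m a) (1\<^sub>m b) (0\<^sub>m b a)"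
  define Q :: "'a mat" where "Q = four_block_mat (0\<^sub>m b a) (1\<^sub>m b) (1\<^sub>m a) (0\<^sub>m a b)"
  have P: "P \<in> carrier_mat (a+b) (b+a)" unfolding P_def by (rule four_block_carrier_mat) simp_all
  have Q: "Q \<in> carrier_mat (b+a) (a+b)" unfolding Q_def by (rule four_block_carrier_mat) simp_all
  have PQ: "P * Q = 1\<^sub>m (a+b)" unfolding P_def Q_def
    by (subst mult_four_block_mat, auto)
  have QP: "Q * P = 1\<^sub>m (b+a)" unfolding P_def Q_def
    by (subst mult_four_block_mat, auto)
  have "P * four_block_mat Y (0\<^sub>m b a) (0\<^sub>m a b) X = four_block_mat (0\<^sub>m a b) X Y (0\<^sub>m b a)"
    unfolding P_def using X Y by (subst mult_four_block_mat, auto)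
  hence "P * four_block_mat Y (0\<^sub>m b a) (0\<^sub>m a b) X * Q = four_block_mat (0\<^sub>m a b) X Y (0\<^sub>m b a) * Q" by simp
  also have "\<dots> = four_block_mat X (0\<^sub>m a b) (0\<^sub>m b a) Y"
    unfolding Q_def using X Y by (subst mult_four_block_mat, auto)
  finally have eq: "four_block_mat X (0\<^sub>m a b) (0\<^sub>m b a) Y = P * four_block_mat Y (0\<^sub>m b a) (0\<^sub>m a b) X * Q" by simp
  have "a + b = b + a" by simp
  show ?thesis
    by (rule similar_matI[of _ _ _ _ "a+b"], insert eq PQ QP P Q X Y, auto simp: add.commute)
qed


abbreviation nzb :: "(nat \<times> 'a::zero) list \<Rightarrow> (nat \<times> 'a) list" where
  "nzb xs \<equiv> filter (\<lambda>(s,e). e \<noteq> 0) xs"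
abbreviation zb :: "(nat \<times> 'a::zero) list \<Rightarrow> (nat \<times> 'a) list" where
  "zb xs \<equiv> filter (\<lambda>(s,e). e = 0) xs"
abbreviation szb :: "(nat \<times> 'a) list \<Rightarrow> nat" where
  "szb xs \<equiv> sum_list (map fst xs)"

lemma szb_split: "szb xs = szb (nzb xs) + szb (zb xs)"
  by (induct xs, auto)

lemma jordan_sort:
  fixes n_as :: "(nat \<times> 'a::comm_ring_1) list"
  shows "similar_mat (jordan_matrix n_as)
    (four_block_mat (jordan_matrix (nzb n_as)) (0\<^sub>m (szb (nzb n_as)) (szb (zb n_as)))
                    (0\<^sub>m (szb (zb n_as)) (szb (nzb n_as))) (jordan_matrix (zb n_as)))"
proof (induct n_as)
  case Nil
  have "jordan_matrix ([] :: (nat \<times> 'a) list) = four_block_mat (jordan_matrix []) (0\<^sub>m 0 0) (0\<^sub>m 0 0) (jordan_matrix [])"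
    by (rule eq_matI, auto)
  moreover have "jordan_matrix ([] :: (nat \<times> 'a) list) \<in> carrier_mat 0 0"
    using jordan_matrix_carrier[of "[] :: (nat \<times> 'a) list"] by simp
  ultimately show ?case using similar_mat_refl[of "jordan_matrix ([] :: (nat \<times> 'a) list)" 0] by simp
next
  case (Cons se rest)
  obtain s e where se: "se = (s,e)" by force
  define J where "J = jordan_block s e"
  define Nr where "Nr = jordan_matrix (nzb rest)"
  define Zr where "Zr = jordan_matrix (zb rest)"
  define a where "a = szb (nzb rest)"
  define c where "c = szb (zb rest)"
  have J: "J \<in> carrier_mat s s" unfolding J_def by simp
  have Nr: "Nr \<in> carrier_mat a a" unfolding Nr_def a_def by simp
  have Zr: "Zr \<in> carrier_mat c c" unfolding Zr_def c_def by simp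
  have szr: "szb rest = a + c" unfolding a_def c_def by (rule szb_split)
  have JR: "jordan_matrix rest \<in> carrier_mat (a+c) (a+c)" using szr[symmetric] by simp
  have IH: "similar_mat (jordan_matrix rest) (four_block_mat Nr (0\<^sub>m a c) (0\<^sub>m c a) Zr)"
    using Cons unfolding Nr_def Zr_def a_def c_def .
  have JMc: "jordan_matrix (se # rest) = four_block_mat J (0\<^sub>m s (a+c)) (0\<^sub>m (a+c) s) (jordan_matrix rest)"
    unfolding se J_def jordan_matrix_Cons szr ..
  have step1: "similar_mat (jordan_matrix (se # rest))
      (four_block_mat J (0\<^sub>m s (a+c)) (0\<^sub>m (a+c) s) (four_block_mat Nr (0\<^sub>m a c) (0\<^sub>m c a) Zr))"
    unfolding JMc by (rule similar_mat_four_block_0_0[OF similar_mat_refl[OF J] IH J JR])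
  also have "four_block_mat J (0\<^sub>m s (a+c)) (0\<^sub>m (a+c) s) (four_block_mat Nr (0\<^sub>m a c) (0\<^sub>m c a) Zr)
     = four_block_mat (four_block_mat J (0\<^sub>m s a) (0\<^sub>m a s) Nr) (0\<^sub>m (s+a) c) (0\<^sub>m c (s+a)) Zr"
    by (rule block_diag_assoc[OF J Nr Zr])
  finally have step2: "similar_mat (jordan_matrix (se # rest))
       (four_block_mat (four_block_mat J (0\<^sub>m s a) (0\<^sub>m a s) Nr) (0\<^sub>m (s+a) c) (0\<^sub>m c (s+a)) Zr)" .
  show ?case
  proof (cases "e = 0")
    case False
    have nz: "nzb (se # rest) = (s,e) # nzb rest" and z: "zb (se # rest) = zb rest" using False se by auto
    have "jordan_matrix (nzb (se # rest)) = four_block_mat J (0\<^sub>m s a) (0\<^sub>m a s) Nr"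
      unfolding nz J_def Nr_def a_def jordan_matrix_Cons ..
    moreover have "szb (nzb (se # rest)) = s + a" unfolding nz a_def by simp
    moreover have "szb (zb (se # rest)) = c" unfolding z c_def ..
    ultimately show ?thesis using step2 unfolding z Zr_def[symmetric] by simp
  next
    case True
    have nz: "nzb (se # rest) = nzb rest" and z: "zb (se # rest) = (s,e) # zb rest" using True se by auto
    have "jordan_matrix (zb (se # rest)) = four_block_mat J (0\<^sub>m s c) (0\<^sub>m c s) Zr"
      unfolding z J_def Zr_def c_def jordan_matrix_Cons ..
    moreover have "szb (zb (se # rest)) = s + c" unfolding z c_def by simp
    moreover have "szb (nzb (se # rest)) = a" unfolding nz a_def ..
    moreover have "similar_mat (jordan_matrix (se # rest))
       (four_block_mat Nr (0\<^sub>m a (s+c)) (0\<^sub>m (s+c) a) (four_block_mat J (0\<^sub>m s c) (0\<^sub>m c s) Zr))"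
    proof -
      have "similar_mat (four_block_mat (four_block_mat J (0\<^sub>m s a) (0\<^sub>m a s) Nr) (0\<^sub>m (s+a) c) (0\<^sub>m c (s+a)) Zr)
          (four_block_mat (four_block_mat Nr (0\<^sub>m a s) (0\<^sub>m s a) J) (0\<^sub>m (s+a) c) (0\<^sub>m c (s+a)) Zr)"
        by (rule similar_mat_four_block_0_0[OF block_diag_swap[OF J Nr] similar_mat_refl[OF Zr] _ Zr],
            insert J Nr, simp)
      also have "four_block_mat (four_block_mat Nr (0\<^sub>m a s) (0\<^sub>m s a) J) (0\<^sub>m (s+a) c) (0\<^sub>m c (s+a)) Zr
          = four_block_mat Nr (0\<^sub>m a (s+c)) (0\<^sub>m (s+c) a) (four_block_mat J (0\<^sub>m s c) (0\<^sub>m c s) Zr)"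
        using block_diag_assoc[OF Nr J Zr] by (simp add: add.commute)
      finally show ?thesis using step2 similar_mat_trans by blast
    qed
    ultimately show ?thesis unfolding nz Nr_def[symmetric] by simp
  qed
qed


lemma poly_jordan_prod_nz:
  fixes l :: "(nat \<times> 'a::field) list"
  assumes "\<forall>(s,e)\<in>set l. e \<noteq> 0"
  shows "poly (\<Prod>(n, a)\<leftarrow>l. [:- a, 1:] ^ n) 0 \<noteq> 0"
  using assms
proof (induct l)
  case (Cons se l)
  obtain s e where se: "se = (s,e)" by force
  have "e \<noteq> 0" using Cons(2) se by auto
  moreover have "poly (\<Prod>(n, a)\<leftarrow>l. [:- a, 1:] ^ n) 0 \<noteq> 0" using Cons by auto
  ultimately show ?case using se by (simp add: poly_prod_list)
qed simp

lemma jordan_nz_det: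
  fixes xs :: "(nat \<times> 'a::field) list"
  shows "det (jordan_matrix (nzb xs)) \<noteq> 0"
proof
  let ?B = "jordan_matrix (nzb xs)" and ?m = "szb (nzb xs)"
  have B: "?B \<in> carrier_mat ?m ?m" by simp
  assume "det ?B = 0"
  then obtain v where v: "v \<in> carrier_vec ?m" "v \<noteq> 0\<^sub>v ?m" "?B *\<^sub>v v = 0\<^sub>v ?m"
    using det_0_iff_vec_prod_zero_field[OF B] by auto
  have "eigenvector ?B v 0" unfolding eigenvector_def using v by auto
  hence "eigenvalue ?B 0" unfolding eigenvalue_def by auto
  hence "poly (char_poly ?B) 0 = 0" using eigenvalue_root_char_poly[OF B] by auto
  moreover have "poly (char_poly ?B) 0 \<noteq> 0"
    unfolding jordan_matrix_char_poly by (rule poly_jordan_prod_nz, auto)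
  ultimately show False by simp
qed

lemma jordan_z_pow:
  assumes "\<forall>(s,e)\<in>set xs. e = 0 \<and> s \<le> k"
  shows "jordan_matrix (xs :: (nat \<times> 'a::field) list) ^\<^sub>m k = 0\<^sub>m (szb xs) (szb xs)"
  using assms
proof (induct xs)
  case Nil
  show ?case by (rule eq_matI, auto)
next
  case (Cons se rest)
  obtain s e where se: "se = (s,e)" by force
  have e: "e = 0" and sk: "s \<le> k" using Cons(2) se by auto
  have IH: "jordan_matrix rest ^\<^sub>m k = 0\<^sub>m (szb rest) (szb rest)" using Cons by auto
  have jb: "jordan_block s e ^\<^sub>m k = 0\<^sub>m s s"
    unfolding e jordan_block_zero_pow by (rule eq_matI, insert sk, auto)
  have "jordan_matrix (se # rest) ^\<^sub>m k = four_block_mat (jordan_block s e ^\<^sub>m k) (0\<^sub>m s (szb rest)) (0\<^sub>m (szb rest) s) (jordan_matrix rest ^\<^sub>m k)"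
    unfolding se jordan_matrix_Cons by (rule pow_four_block_mat, auto)
  also have "\<dots> = 0\<^sub>m (szb (se # rest)) (szb (se # rest))" unfolding jb IH using se by simp
  finally show ?case .
qed

lemma kernel_dim_pow_jordan:
  fixes A :: "'a::field mat"
  assumes A: "A \<in> carrier_mat n n" and sim: "similar_mat A (jordan_matrix n_as)"
  shows "kernel_dim (A ^\<^sub>m m) = sum_list (map (min m) (map fst (zb n_as)))"
proof -
  have "kernel_dim (A ^\<^sub>m m) = dim_gen_eigenspace A 0 m"
  proof -
    have "char_matrix A 0 = A" unfolding char_matrix_def using A by (intro eq_matI, auto)
    thus ?thesis unfolding dim_gen_eigenspace_def by simp
  qed
  also have "\<dots> = dim_gen_eigenspace (jordan_matrix n_as) 0 m"
    using dim_gen_eigenspace_similar[OF sim] by simp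
  also have "\<dots> = (\<Sum> n \<leftarrow> map fst [(n, e)\<leftarrow>n_as . e = 0]. min m n)"
    by (rule dim_gen_eigenspace_jordan_matrix)
  finally show ?thesis by (simp add: comp_def)
qed

lemma sum_min_eq:
  assumes "sum_list (map (min (Suc k)) l) = sum_list (map (min k) (l :: nat list))"
  shows "\<forall>s\<in>set l. s \<le> k"
  using assms
proof (induct l)
  case (Cons x l)
  have le: "sum_list (map (min k) l) \<le> sum_list (map (min (Suc k)) l)"
    by (rule sum_list_mono, auto)
  have le2: "min k x \<le> min (Suc k) x" by simp
  have eq: "min (Suc k) x + sum_list (map (min (Suc k)) l) = min k x + sum_list (map (min k) l)"
    using Cons(2) by simp
  have "min (Suc k) x = min k x" using eq le le2 by linarith
  hence "x \<le> k" by (simp add: min_def split: if_splits)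
  moreover have "sum_list (map (min (Suc k)) l) = sum_list (map (min k) l)" using eq le le2 by linarith
  ultimately show ?case using Cons(1) by auto
qed simp

lemma sum_min_le: "\<forall>s\<in>set l. s \<le> k \<Longrightarrow> sum_list (map (min k) l) = sum_list (l :: nat list)"
  by (induct l, auto simp: min_def)


lemma mult_carrier_nn[simp]: "A \<in> carrier_mat n n \<Longrightarrow> B \<in> carrier_mat n n \<Longrightarrow> A * B \<in> carrier_mat n n"
  by simp

lemma pow_mat_add:
  assumes A: "A \<in> carrier_mat n n"
  shows "A ^\<^sub>m (a + b) = A ^\<^sub>m a * A ^\<^sub>m b"
proof (induct b)
  case 0 thus ?case using A by simp
next
  case (Suc b)
  have "A ^\<^sub>m (a + Suc b) = A ^\<^sub>m (a + b) * A" by simp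
  also have "\<dots> = A ^\<^sub>m a * A ^\<^sub>m b * A" using Suc by simp
  also have "\<dots> = A ^\<^sub>m a * (A ^\<^sub>m b * A)" using A by (simp add: assoc_mult_mat[of _ n n _ n _ n])
  finally show ?case by simp
qed

lemma pow_mat_Suc_left:
  assumes A: "A \<in> carrier_mat n n"
  shows "A ^\<^sub>m (Suc m) = A * A ^\<^sub>m m"
  using pow_mat_add[OF A, of 1 m] A by simp

lemma comm_pow_left:
  assumes A: "A \<in> carrier_mat n n" and X: "X \<in> carrier_mat n n" and c: "A * X = X * A"
  shows "A ^\<^sub>m m * X = X * A ^\<^sub>m m"
proof (induct m)
  case 0 thus ?case using A X by simp
next
  case (Suc m)
  have "A ^\<^sub>m Suc m * X = A ^\<^sub>m m * (A * X)" using A X by (simp add: assoc_mult_mat[of _ n n _ n _ n])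
  also have "\<dots> = (A ^\<^sub>m m * X) * A" unfolding c using A X by (simp add: assoc_mult_mat[of _ n n _ n _ n])
  also have "\<dots> = X * A ^\<^sub>m Suc m" unfolding Suc using A X by (simp add: assoc_mult_mat[of _ n n _ n _ n])
  finally show ?case .
qed

lemma comm_pow_both:
  assumes A: "A \<in> carrier_mat n n" and X: "X \<in> carrier_mat n n" and c: "A * X = X * A"
  shows "A ^\<^sub>m a * X ^\<^sub>m b = X ^\<^sub>m b * A ^\<^sub>m a"
proof -
  have c1: "A ^\<^sub>m a * X = X * A ^\<^sub>m a" by (rule comm_pow_left[OF A X c])
  have "X ^\<^sub>m b * A ^\<^sub>m a = A ^\<^sub>m a * X ^\<^sub>m b" by (rule comm_pow_left[OF X _ c1[symmetric]], insert A, simp)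
  thus ?thesis by simp
qed

lemma drazin_power_form:
  assumes A: "A \<in> carrier_mat n n" and X: "X \<in> carrier_mat n n"
    and c: "A * X = X * A" and xax: "X * A * X = X"
  shows "X = A ^\<^sub>m m * X ^\<^sub>m (Suc m)"
proof (induct m)
  case 0 thus ?case using A X by simp
next
  case (Suc m)
  have x2: "X = A * (X * X)"
  proof -
    have "X = X * A * X" using xax by simp
    also have "\<dots> = A * X * X" using c by simp
    finally show ?thesis using A X by (simp add: assoc_mult_mat[of _ n n _ n _ n])
  qed
  have "X = A ^\<^sub>m m * X ^\<^sub>m m * X" using Suc A X by (simp add: assoc_mult_mat[of _ n n _ n _ n])
  also have "\<dots> = A ^\<^sub>m m * X ^\<^sub>m m * (A * (X * X))" using x2 by simp
  also have "\<dots> = A ^\<^sub>m m * (X ^\<^sub>m m * A) * (X * X)" using A X by (simp add: assoc_mult_mat[of _ n n _ n _ n])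
  also have "X ^\<^sub>m m * A = A * X ^\<^sub>m m" using comm_pow_left[OF X A c[symmetric], of m] by simp
  also have "A ^\<^sub>m m * (A * X ^\<^sub>m m) * (X * X) = (A ^\<^sub>m m * A) * (X ^\<^sub>m m * X * X)"
    using A X by (simp add: assoc_mult_mat[of _ n n _ n _ n])
  also have "\<dots> = A ^\<^sub>m Suc m * X ^\<^sub>m Suc (Suc m)" by simp
  finally show ?case .
qed

lemma drazin_unique:
  fixes A X Y :: "'a::comm_ring_1 mat"
  assumes A: "A \<in> carrier_mat n n" and X: "X \<in> carrier_mat n n" and Y: "Y \<in> carrier_mat n n"
    and X1: "A ^\<^sub>m (k+1) * X = A ^\<^sub>m k" and X2: "X * A * X = X" and X3: "A * X = X * A"
    and Y1: "A ^\<^sub>m (k+1) * Y = A ^\<^sub>m k" and Y2: "Y * A * Y = Y" and Y3: "A * Y = Y * A"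
  shows "X = Y"
proof -
  note as = assoc_mult_mat[of _ n n _ n _ n]
  define E where "E = A * X"
  define F where "F = A * Y"
  have E: "E \<in> carrier_mat n n" and F: "F \<in> carrier_mat n n" using A X Y by (auto simp: E_def F_def)
  have AA: "A ^\<^sub>m (k+1) * A = A * A ^\<^sub>m (k+1)" by (rule comm_pow_left[OF A A refl])
  have AF: "A ^\<^sub>m (k+1) * F = A ^\<^sub>m (k+1)"
  proof -
    have "A ^\<^sub>m (k+1) * F = (A ^\<^sub>m (k+1) * A) * Y" unfolding F_def using A Y by (simp add: as)
    also have "\<dots> = A * (A ^\<^sub>m (k+1) * Y)" unfolding AA using A Y by (simp add: as)
    also have "\<dots> = A * A ^\<^sub>m k" using Y1 by simp
    also have "\<dots> = A ^\<^sub>m (k+1)" using pow_mat_Suc_left[OF A, of k] by simp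
    finally show ?thesis .
  qed
  have AE: "A ^\<^sub>m (k+1) * E = A ^\<^sub>m (k+1)"
  proof -
    have "A ^\<^sub>m (k+1) * E = (A ^\<^sub>m (k+1) * A) * X" unfolding E_def using A X by (simp add: as)
    also have "\<dots> = A * (A ^\<^sub>m (k+1) * X)" unfolding AA using A X by (simp add: as)
    also have "\<dots> = A * A ^\<^sub>m k" using X1 by simp
    also have "\<dots> = A ^\<^sub>m (k+1)" using pow_mat_Suc_left[OF A, of k] by simp
    finally show ?thesis .
  qed
  have FA: "F * A ^\<^sub>m (k+1) = A ^\<^sub>m (k+1)"
  proof -
    have "A * F = A * (Y * A)" unfolding F_def Y3 ..
    also have "\<dots> = F * A" unfolding F_def using A Y by (simp add: as)
    finally have "A * F = F * A" .
    from comm_pow_left[OF A F this, of "k+1"] AF show ?thesis by simp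
  qed
  have EA: "E * A ^\<^sub>m (k+1) = A ^\<^sub>m (k+1)"
  proof -
    have "A * E = A * (X * A)" unfolding E_def X3 ..
    also have "\<dots> = E * A" unfolding E_def using A X by (simp add: as)
    finally have "A * E = E * A" .
    from comm_pow_left[OF A E this, of "k+1"] AE show ?thesis by simp
  qed
  have Epow: "E = A ^\<^sub>m (k+1) * X ^\<^sub>m (k+1)"
  proof -
    have "E = A * (A ^\<^sub>m k * X ^\<^sub>m (k+1))" unfolding E_def using drazin_power_form[OF A X X3 X2, of k] by simp
    also have "\<dots> = A ^\<^sub>m (k+1) * X ^\<^sub>m (k+1)" using A X pow_mat_Suc_left[OF A, of k] by (simp add: as)
    finally show ?thesis .
  qed
  have Fpow: "F = A ^\<^sub>m (k+1) * Y ^\<^sub>m (k+1)"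
  proof -
    have "F = A * (A ^\<^sub>m k * Y ^\<^sub>m (k+1))" unfolding F_def using drazin_power_form[OF A Y Y3 Y2, of k] by simp
    also have "\<dots> = A ^\<^sub>m (k+1) * Y ^\<^sub>m (k+1)" using A Y pow_mat_Suc_left[OF A, of k] by (simp add: as)
    finally show ?thesis .
  qed
  have Epow2: "E = X ^\<^sub>m (k+1) * A ^\<^sub>m (k+1)" unfolding Epow by (rule comm_pow_both[OF A X X3])
  have "F * E = E"
  proof -
    have "F * E = (F * A ^\<^sub>m (k+1)) * X ^\<^sub>m (k+1)" unfolding Epow using A X F by (simp add: as)
    thus ?thesis unfolding FA Epow[symmetric] .
  qed
  moreover have "F * E = F"
  proof -
    have "F * E = Y ^\<^sub>m (k+1) * (A ^\<^sub>m (k+1) * E)"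
      unfolding Fpow comm_pow_both[OF A Y Y3] using A Y E by (simp add: as)
    also have "\<dots> = Y ^\<^sub>m (k+1) * A ^\<^sub>m (k+1)" unfolding AE ..
    also have "\<dots> = F" unfolding Fpow comm_pow_both[OF A Y Y3] ..
    finally show ?thesis .
  qed
  ultimately have EF: "E = F" by simp
  have "X = X * A * X" using X2 by simp
  also have "\<dots> = X * E" unfolding E_def using A X by (simp add: as)
  also have "\<dots> = X * (A * Y)" unfolding EF F_def ..
  also have "\<dots> = E * Y" unfolding E_def X3 using A X Y by (simp add: as)
  also have "\<dots> = Y * A * Y" unfolding EF F_def Y3 using A Y by (simp add: as)
  also have "\<dots> = Y" using Y2 .
  finally show ?thesis .
qed


definition emb1 :: "nat \<Rightarrow> nat \<Rightarrow> 'a::{zero,one} mat" where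
  "emb1 m a = mat m a (\<lambda>(i,j). if i = j then 1 else 0)"
definition emb2 :: "nat \<Rightarrow> nat \<Rightarrow> 'a::{zero,one} mat" where
  "emb2 a m = mat a m (\<lambda>(i,j). if i = j then 1 else 0)"

lemma emb1_carrier[simp]: "emb1 m a \<in> carrier_mat m a" unfolding emb1_def by simp
lemma emb2_carrier[simp]: "emb2 a m \<in> carrier_mat a m" unfolding emb2_def by simp

lemma emb1_mult:
  fixes Y :: "'a::comm_ring_1 mat"
  assumes Y: "Y \<in> carrier_mat a b" and am: "a \<le> m"
  shows "emb1 m a * Y = mat m b (\<lambda>(i,j). if i < a then Y $$ (i,j) else 0)"
proof (rule eq_matI)
  fix i j assume i: "i < dim_row (mat m b (\<lambda>(i,j). if i < a then Y $$ (i,j) else 0))"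
    and j: "j < dim_col (mat m b (\<lambda>(i,j). if i < a then Y $$ (i,j) else 0))"
  hence i: "i < m" and j: "j < b" by auto
  have "(emb1 m a * Y) $$ (i,j) = (\<Sum>l\<in>{0..<a}. (if i = l then 1 else 0) * Y $$ (l,j))"
    using i j Y by (simp add: emb1_def scalar_prod_def)
  also have "\<dots> = (\<Sum>l\<in>{0..<a}. if l = i then Y $$ (l,j) else 0)" by (rule sum.cong, auto)
  also have "\<dots> = (if i < a then Y $$ (i,j) else 0)" by (simp add: sum.delta)
  finally show "(emb1 m a * Y) $$ (i,j) = mat m b (\<lambda>(i,j). if i < a then Y $$ (i,j) else 0) $$ (i,j)"
    using i j by simp
qed (insert Y, auto simp: emb1_def)

lemma mult_emb2:
  fixes Y :: "'a::comm_ring_1 mat"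
  assumes Y: "Y \<in> carrier_mat b a" and am: "a \<le> m"
  shows "Y * emb2 a m = mat b m (\<lambda>(i,j). if j < a then Y $$ (i,j) else 0)"
proof (rule eq_matI)
  fix i j assume i: "i < dim_row (mat b m (\<lambda>(i,j). if j < a then Y $$ (i,j) else 0))"
    and j: "j < dim_col (mat b m (\<lambda>(i,j). if j < a then Y $$ (i,j) else 0))"
  hence i: "i < b" and j: "j < m" by auto
  have "(Y * emb2 a m) $$ (i,j) = (\<Sum>l\<in>{0..<a}. Y $$ (i,l) * (if l = j then 1 else 0))"
    using i j Y by (simp add: emb2_def scalar_prod_def)
  also have "\<dots> = (\<Sum>l\<in>{0..<a}. if l = j then Y $$ (i,l) else 0)" by (rule sum.cong, auto)
  also have "\<dots> = (if j < a then Y $$ (i,j) else 0)" by (simp add: sum.delta)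
  finally show "(Y * emb2 a m) $$ (i,j) = mat b m (\<lambda>(i,j). if j < a then Y $$ (i,j) else 0) $$ (i,j)"
    using i j by simp
qed (insert Y, auto simp: emb2_def)

lemma emb_block:
  fixes Y :: "'a::comm_ring_1 mat"
  assumes Y: "Y \<in> carrier_mat a a"
  shows "emb1 (a+c) a * Y * emb2 a (a+c) = four_block_mat Y (0\<^sub>m a c) (0\<^sub>m c a) (0\<^sub>m c c)"
proof -
  define M1 where "M1 = mat (a+c) a (\<lambda>(i,j). if i < a then Y $$ (i,j) else 0)"
  have h1: "emb1 (a+c) a * Y = M1" unfolding M1_def by (rule emb1_mult[OF Y], simp)
  have M1: "M1 \<in> carrier_mat (a+c) a" unfolding M1_def by simp
  have "emb1 (a+c) a * Y * emb2 a (a+c) = M1 * emb2 a (a+c)" unfolding h1 ..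
  also have "\<dots> = mat (a+c) (a+c) (\<lambda>(i,j). if j < a then M1 $$ (i,j) else 0)"
    by (rule mult_emb2[OF M1], simp)
  also have "\<dots> = four_block_mat Y (0\<^sub>m a c) (0\<^sub>m c a) (0\<^sub>m c c)"
    by (rule eq_matI, insert Y, auto simp: M1_def)
  finally show ?thesis .
qed

lemma emb21: "emb2 a (a+c) * emb1 (a+c) a = (1\<^sub>m a :: 'a::comm_ring_1 mat)"
proof (rule eq_matI)
  fix i j assume i: "i < dim_row (1\<^sub>m a :: 'a mat)" and j: "j < dim_col (1\<^sub>m a :: 'a mat)"
  hence i: "i < a" and j: "j < a" by auto
  have "(emb2 a (a+c) * emb1 (a+c) a :: 'a mat) $$ (i,j) = (\<Sum>l\<in>{0..<a+c}. (if i = l then 1 else 0) * (if l = j then 1 else 0))"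
    using i j by (simp add: emb1_def emb2_def scalar_prod_def)
  also have "\<dots> = (\<Sum>l\<in>{0..<a+c}. if l = i then (if i = j then 1 else 0) else 0)" by (rule sum.cong, auto)
  also have "\<dots> = (if i = j then 1 else 0)" using i by (simp add: sum.delta)
  finally show "(emb2 a (a+c) * emb1 (a+c) a :: 'a mat) $$ (i,j) = (1\<^sub>m a :: 'a mat) $$ (i,j)" using i j by simp
qed (auto simp: emb1_def emb2_def)


lemma det_pow_mat:
  fixes B :: "'a::comm_ring_1 mat"
  assumes B: "B \<in> carrier_mat m m"
  shows "det (B ^\<^sub>m k) = det B ^ k"
proof (induct k)
  case 0 thus ?case by simp
next
  case (Suc k)
  have "det (B ^\<^sub>m Suc k) = det (B ^\<^sub>m k * B)" by simp
  also have "\<dots> = det (B ^\<^sub>m k) * det B" by (rule det_mult[OF pow_carrier_mat[OF B] B])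
  finally show ?case using Suc by simp
qed

lemma block_diag_mult:
  fixes Y1 Y2 W1 W2 :: "'a::comm_ring_1 mat"
  assumes "Y1 \<in> carrier_mat a a" "Y2 \<in> carrier_mat a a" "W1 \<in> carrier_mat c c" "W2 \<in> carrier_mat c c"
  shows "four_block_mat Y1 (0\<^sub>m a c) (0\<^sub>m c a) W1 * four_block_mat Y2 (0\<^sub>m a c) (0\<^sub>m c a) W2
       = four_block_mat (Y1 * Y2) (0\<^sub>m a c) (0\<^sub>m c a) (W1 * W2)"
  by (subst mult_four_block_mat, insert assms, auto)

lemma conj_mult:
  fixes P Q M1 M2 :: "'a::comm_ring_1 mat"
  assumes P: "P \<in> carrier_mat m m" and Q: "Q \<in> carrier_mat m m" and QP: "Q * P = 1\<^sub>m m"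
    and M1: "M1 \<in> carrier_mat m m" and M2: "M2 \<in> carrier_mat m m"
  shows "(P * M1 * Q) * (P * M2 * Q) = P * (M1 * M2) * Q"
proof -
  note as = assoc_mult_mat[of _ m m _ m _ m]
  have "(P * M1 * Q) * (P * M2 * Q) = P * (M1 * ((Q * P) * (M2 * Q)))" using P Q M1 M2 by (simp add: as)
  also have "\<dots> = P * (M1 * (M2 * Q))" unfolding QP using M2 Q by simp
  also have "\<dots> = P * (M1 * M2) * Q" using P Q M1 M2 by (simp add: as)
  finally show ?thesis .
qed


lemma assoc5:
  fixes P E1 C E2 Q :: "'a::comm_ring_1 mat"
  assumes P: "P \<in> carrier_mat n n" and E1: "E1 \<in> carrier_mat n a" and C: "C \<in> carrier_mat a a"
    and E2: "E2 \<in> carrier_mat a n" and Q: "Q \<in> carrier_mat n n"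
  shows "(P * E1) * C * (E2 * Q) = P * (E1 * C * E2) * Q"
proof -
  have 1: "(P * E1) * C = P * (E1 * C)" by (rule assoc_mult_mat[OF P E1 C])
  have E1C: "E1 * C \<in> carrier_mat n a" using E1 C by simp
  have E2Q: "E2 * Q \<in> carrier_mat a n" using E2 Q by simp
  have 2: "P * (E1 * C) * (E2 * Q) = P * ((E1 * C) * (E2 * Q))" by (rule assoc_mult_mat[OF P E1C E2Q])
  have 3: "(E1 * C) * (E2 * Q) = (E1 * C * E2) * Q" by (rule assoc_mult_mat[OF E1C E2 Q, symmetric])
  have M: "E1 * C * E2 \<in> carrier_mat n n" using E1C E2 by simp
  have 4: "P * ((E1 * C * E2) * Q) = P * (E1 * C * E2) * Q" by (rule assoc_mult_mat[OF P M Q, symmetric])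
  show ?thesis unfolding 1 2 3 4 ..
qed

lemma assoc4:
  fixes P E1 E2 Q :: "'a::comm_ring_1 mat"
  assumes P: "P \<in> carrier_mat n n" and E1: "E1 \<in> carrier_mat n a"
    and E2: "E2 \<in> carrier_mat a n" and Q: "Q \<in> carrier_mat n n"
  shows "(P * E1) * (E2 * Q) = P * (E1 * 1\<^sub>m a * E2) * Q"
  using assoc5[OF P E1 one_carrier_mat E2 Q] E1 by simp

lemma assoc4':
  fixes P E1 E2 Q :: "'a::comm_ring_1 mat"
  assumes P: "P \<in> carrier_mat n n" and E1: "E1 \<in> carrier_mat n a"
    and E2: "E2 \<in> carrier_mat a n" and Q: "Q \<in> carrier_mat n n"
  shows "(E2 * Q) * (P * E1) = E2 * (Q * P) * E1"
proof -
  have E2Q: "E2 * Q \<in> carrier_mat a n" using E2 Q by simp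
  have QP: "Q * P \<in> carrier_mat n n" using Q P by simp
  have "(E2 * Q) * (P * E1) = ((E2 * Q) * P) * E1" by (rule assoc_mult_mat[OF E2Q P E1, symmetric])
  also have "(E2 * Q) * P = E2 * (Q * P)" by (rule assoc_mult_mat[OF E2 Q P])
  finally show ?thesis .
qed

lemma drazin_structure:
  fixes A :: "complex mat"
  assumes A: "A \<in> carrier_mat n n" and r1: "mrank (A ^\<^sub>m (k+1)) = r" and r0: "mrank (A ^\<^sub>m k) = r"
  shows "\<exists>F H C X. F \<in> carrier_mat n r \<and> H \<in> carrier_mat r n \<and> C \<in> carrier_mat r r \<and> H * F = 1\<^sub>m r
    \<and> det C \<noteq> 0 \<and> A ^\<^sub>m (k+1) = F * C * H \<and> X \<in> carrier_mat n n \<and> A ^\<^sub>m (k+1) * X = A ^\<^sub>m k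
    \<and> X * A * X = X \<and> A * X = X * A \<and> X * A = F * H"
proof -
  obtain as where "char_poly A = (\<Prod>a\<leftarrow>as. [:- a, 1:])" using char_poly_factorized[OF A] by auto
  from jordan_nf_exists[OF A this] obtain n_as where jnf: "jordan_nf A n_as" by auto
  hence sim: "similar_mat A (jordan_matrix n_as)" unfolding jordan_nf_def by auto
  define B where "B = jordan_matrix (nzb n_as)"
  define N where "N = jordan_matrix (zb n_as)"
  define a where "a = szb (nzb n_as)"
  define c where "c = szb (zb n_as)"
  define D where "D = four_block_mat B (0\<^sub>m a c) (0\<^sub>m c a) N"
  have B: "B \<in> carrier_mat a a" unfolding B_def a_def by simp
  have N: "N \<in> carrier_mat c c" unfolding N_def c_def by simp
  have D: "D \<in> carrier_mat (a+c) (a+c)" unfolding D_def using B N by simp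
  have sim2: "similar_mat A D"
    unfolding D_def B_def N_def a_def c_def by (rule similar_mat_trans[OF sim jordan_sort])
  from similar_matD[OF sim2] obtain m P Q where
    car: "{A, D, P, Q} \<subseteq> carrier_mat m m" and PQ: "P * Q = 1\<^sub>m m" and QP: "Q * P = 1\<^sub>m m" and AD: "A = P * D * Q"
    by blast
  have m: "m = n" using car A by auto
  have nac: "n = a + c" using car D m by auto
  have P: "P \<in> carrier_mat n n" and Q: "Q \<in> carrier_mat n n" using car m by auto
  have Dn: "D \<in> carrier_mat n n" using D nac by simp
  have wit: "similar_mat_wit A D P Q"
    by (rule similar_mat_witI[OF PQ[unfolded m] QP[unfolded m] AD A Dn P Q])
  have Apow: "A ^\<^sub>m j = P * D ^\<^sub>m j * Q" for j by (rule similar_mat_wit_pow_id[OF wit])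
  have Dpow: "D ^\<^sub>m j = four_block_mat (B ^\<^sub>m j) (0\<^sub>m a c) (0\<^sub>m c a) (N ^\<^sub>m j)" for j
    unfolding D_def by (rule pow_four_block_mat[OF B N])
  define L where "L = map fst (zb n_as)"
  have kd: "kernel_dim (A ^\<^sub>m j) = sum_list (map (min j) L)" for j
    unfolding L_def by (rule kernel_dim_pow_jordan[OF A sim])
  have rn1: "mrank (A ^\<^sub>m (k+1)) + kernel_dim (A ^\<^sub>m (k+1)) = n" by (rule rank_nullity_mat, insert A, simp)
  have rn0: "mrank (A ^\<^sub>m k) + kernel_dim (A ^\<^sub>m k) = n" by (rule rank_nullity_mat, insert A, simp)
  have "sum_list (map (min (Suc k)) L) = sum_list (map (min k) L)"
    using rn1 rn0 r1 r0 kd[of "k+1"] kd[of k] by simp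
  from sum_min_eq[OF this] have Lk: "\<forall>s\<in>set L. s \<le> k" .
  have Nk: "N ^\<^sub>m k = 0\<^sub>m c c"
    unfolding N_def c_def
  proof (rule jordan_z_pow)
    show "\<forall>(s,e)\<in>set (zb n_as). e = 0 \<and> s \<le> k"
    proof
      fix x assume x: "x \<in> set (zb n_as)"
      obtain s e where se: "x = (s,e)" by force
      have "e = 0" using x se by auto
      moreover have "s \<in> set L" using x se unfolding L_def by force
      ultimately show "case x of (s, e) \<Rightarrow> e = 0 \<and> s \<le> k" using Lk se by auto
    qed
  qed
  have Nk1: "N ^\<^sub>m (k+1) = 0\<^sub>m c c" using Nk N by simp
  have ra: "r = a"
  proof -
    have "sum_list (map (min k) L) = sum_list L" by (rule sum_min_le[OF Lk])
    also have "sum_list L = c" unfolding L_def c_def ..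
    finally have "kernel_dim (A ^\<^sub>m k) = c" using kd[of k] by simp
    thus ?thesis using rn0 r0 nac by simp
  qed
  have dB: "det B \<noteq> 0" unfolding B_def by (rule jordan_nz_det)
  from det_non_zero_imp_unit[OF B dB, of "()"] obtain Bi where Bi: "Bi \<in> carrier_mat a a"
    and BiB: "Bi * B = 1\<^sub>m a" and BBi: "B * Bi = 1\<^sub>m a"
    unfolding Units_def ring_mat_def by auto
  define Z where "Z = (0\<^sub>m c c :: complex mat)"
  have Z: "Z \<in> carrier_mat c c" unfolding Z_def by simp
  define D' where "D' = four_block_mat Bi (0\<^sub>m a c) (0\<^sub>m c a) Z"
  have D': "D' \<in> carrier_mat n n" unfolding D'_def nac using Bi Z by simp
  define X where "X = P * D' * Q"
  define F where "F = P * emb1 n a"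
  define H where "H = emb2 a n * Q"
  define C where "C = B ^\<^sub>m (k+1)"
  have X: "X \<in> carrier_mat n n" unfolding X_def using P D' Q by simp
  have F: "F \<in> carrier_mat n a" unfolding F_def by (rule mult_carrier_mat[OF P emb1_carrier])
  have H: "H \<in> carrier_mat a n" unfolding H_def by (rule mult_carrier_mat[OF emb2_carrier Q])
  have C: "C \<in> carrier_mat a a" unfolding C_def using B by simp
  have dC: "det C \<noteq> 0" unfolding C_def det_pow_mat[OF B] using dB by simp
  have Dk: "D ^\<^sub>m k = four_block_mat (B ^\<^sub>m k) (0\<^sub>m a c) (0\<^sub>m c a) Z" unfolding Dpow Nk Z_def ..
  have Dk1: "D ^\<^sub>m (k+1) = four_block_mat C (0\<^sub>m a c) (0\<^sub>m c a) Z" unfolding Dpow Nk1 Z_def C_def ..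
  have Dkn: "D ^\<^sub>m j \<in> carrier_mat n n" for j using Dn by simp
  note cm = conj_mult[OF P Q QP[unfolded m]]
  have e1: "A ^\<^sub>m (k+1) * X = A ^\<^sub>m k"
  proof -
    have "A ^\<^sub>m (k+1) * X = P * (D ^\<^sub>m (k+1) * D') * Q" unfolding Apow X_def by (rule cm[OF Dkn D'])
    also have "D ^\<^sub>m (k+1) * D' = four_block_mat (C * Bi) (0\<^sub>m a c) (0\<^sub>m c a) (Z * Z)"
      unfolding Dk1 D'_def by (rule block_diag_mult[OF C Bi Z Z])
    also have "C * Bi = B ^\<^sub>m k" unfolding C_def using B Bi BBi by (simp add: assoc_mult_mat[of _ a a _ a _ a])
    also have "Z * Z = Z" unfolding Z_def by simp
    also have "P * four_block_mat (B ^\<^sub>m k) (0\<^sub>m a c) (0\<^sub>m c a) Z * Q = A ^\<^sub>m k" unfolding Apow Dk ..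
    finally show ?thesis .
  qed
  have e2: "X * A * X = X"
  proof -
    have "X * A = P * (D' * D) * Q" unfolding X_def by (subst AD, rule cm[OF D' Dn])
    also have "D' * D = four_block_mat (Bi * B) (0\<^sub>m a c) (0\<^sub>m c a) (Z * N)"
      unfolding D'_def D_def by (rule block_diag_mult[OF Bi B Z N])
    finally have XA: "X * A = P * four_block_mat (Bi * B) (0\<^sub>m a c) (0\<^sub>m c a) (Z * N) * Q" .
    have bb: "four_block_mat (Bi * B) (0\<^sub>m a c) (0\<^sub>m c a) (Z * N) \<in> carrier_mat n n" unfolding nac using Bi B Z N by simp
    have "X * A * X = (P * four_block_mat (Bi * B) (0\<^sub>m a c) (0\<^sub>m c a) (Z * N) * Q) * X" unfolding XA ..
    also have "\<dots> = (P * four_block_mat (Bi * B) (0\<^sub>m a c) (0\<^sub>m c a) (Z * N) * Q) * (P * D' * Q)" unfolding X_def ..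
    also have "\<dots> = P * (four_block_mat (Bi * B) (0\<^sub>m a c) (0\<^sub>m c a) (Z * N) * D') * Q"
      by (rule cm[OF bb D'])
    also have "four_block_mat (Bi * B) (0\<^sub>m a c) (0\<^sub>m c a) (Z * N) * D' = four_block_mat (Bi * B * Bi) (0\<^sub>m a c) (0\<^sub>m c a) (Z * N * Z)"
      unfolding D'_def by (rule block_diag_mult, insert Bi B Z N, auto)
    also have "Bi * B * Bi = Bi" unfolding BiB using Bi by simp
    also have "Z * N * Z = Z" unfolding Z_def using N by simp
    finally show ?thesis unfolding X_def D'_def .
  qed
  have XA: "X * A = P * four_block_mat (1\<^sub>m a) (0\<^sub>m a c) (0\<^sub>m c a) Z * Q"
  proof -
    have "X * A = P * (D' * D) * Q" unfolding X_def by (subst AD, rule cm[OF D' Dn])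
    also have "D' * D = four_block_mat (Bi * B) (0\<^sub>m a c) (0\<^sub>m c a) (Z * N)"
      unfolding D'_def D_def by (rule block_diag_mult[OF Bi B Z N])
    also have "Bi * B = 1\<^sub>m a" by (rule BiB)
    also have "Z * N = Z" unfolding Z_def using N by simp
    finally show ?thesis .
  qed
  have AX: "A * X = P * four_block_mat (1\<^sub>m a) (0\<^sub>m a c) (0\<^sub>m c a) Z * Q"
  proof -
    have "A * X = P * (D * D') * Q" unfolding X_def by (subst AD, rule cm[OF Dn D'])
    also have "D * D' = four_block_mat (B * Bi) (0\<^sub>m a c) (0\<^sub>m c a) (N * Z)"
      unfolding D'_def D_def by (rule block_diag_mult[OF B Bi N Z])
    also have "B * Bi = 1\<^sub>m a" by (rule BBi)
    also have "N * Z = Z" unfolding Z_def using N by simp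
    finally show ?thesis .
  qed
  have e3: "A * X = X * A" unfolding AX XA ..
  have HF: "H * F = 1\<^sub>m a"
  proof -
    have "H * F = emb2 a n * (Q * P) * emb1 n a" unfolding H_def F_def
      by (rule assoc4'[OF P emb1_carrier emb2_carrier Q])
    also have "\<dots> = emb2 a (a+c) * emb1 (a+c) a" unfolding QP m nac
      by (subst right_mult_one_mat[OF emb2_carrier], rule refl)
    also have "\<dots> = 1\<^sub>m a" by (rule emb21)
    finally show ?thesis .
  qed
  have emb: "emb1 n a * Y * emb2 a n = four_block_mat Y (0\<^sub>m a c) (0\<^sub>m c a) (0\<^sub>m c c)" if Y: "Y \<in> carrier_mat a a" for Y :: "complex mat"
    unfolding nac by (rule emb_block[OF Y])
  have FCH: "A ^\<^sub>m (k+1) = F * C * H"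
  proof -
    have "F * C * H = P * (emb1 n a * C * emb2 a n) * Q" unfolding F_def H_def
      by (rule assoc5[OF P emb1_carrier C emb2_carrier Q])
    also have "\<dots> = P * D ^\<^sub>m (k+1) * Q" unfolding emb[OF C] Dk1 Z_def ..
    finally show ?thesis unfolding Apow ..
  qed
  have FH: "X * A = F * H"
  proof -
    have "F * H = P * (emb1 n a * 1\<^sub>m a * emb2 a n) * Q" unfolding F_def H_def
      by (rule assoc4[OF P emb1_carrier emb2_carrier Q])
    also have "\<dots> = X * A" unfolding emb[OF one_carrier_mat] XA Z_def ..
    finally show ?thesis ..
  qed
  show ?thesis
    by (rule exI[of _ F], rule exI[of _ H], rule exI[of _ C], rule exI[of _ X],
        unfold ra, insert F H C HF dC FCH X e1 e2 e3 FH, auto)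
qed


theorem corollary2p6:
  fixes A :: "complex mat" and n k r :: nat
  assumes "A \<in> carrier_mat n n"
    and "matrix_index A = k"
    and "mrank (A ^\<^sub>m (k+1)) = r" and "mrank (A ^\<^sub>m k) = r" and "r \<le> n"
  shows "\<forall>i<n. \<forall>j<n. (drazin A * A) $$ (i,j) =
    (\<Sum>\<beta>\<in>{\<beta>\<in>Jrn r n. i \<in> \<beta>}.
        det (submatrix (mat_col_replace (A ^\<^sub>m (k+1)) i (col (A ^\<^sub>m (k+1)) j)) \<beta> \<beta>))
    / (\<Sum>\<beta>\<in>Jrn r n. det (submatrix (A ^\<^sub>m (k+1)) \<beta> \<beta>))"
proof -
  note A = assms(1)
  from drazin_structure[OF A assms(3) assms(4)] obtain F H C X where
    F: "F \<in> carrier_mat n r" and H: "H \<in> carrier_mat r n" and C: "C \<in> carrier_mat r r"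
    and HF: "H * F = 1\<^sub>m r" and dC: "det C \<noteq> 0" and FCH: "A ^\<^sub>m (k+1) = F * C * H"
    and X: "X \<in> carrier_mat n n" and X1: "A ^\<^sub>m (k+1) * X = A ^\<^sub>m k" and X2: "X * A * X = X"
    and X3: "A * X = X * A" and XA: "X * A = F * H"
    by blast
  have dr: "drazin A = X"
    unfolding drazin_def assms(2)
  proof (rule the_equality)
    show "X \<in> carrier_mat (dim_row A) (dim_row A) \<and> A ^\<^sub>m (k + 1) * X = A ^\<^sub>m k \<and> X * A * X = X \<and> A * X = X * A"
      using X X1 X2 X3 A by auto
    fix Y assume Y: "Y \<in> carrier_mat (dim_row A) (dim_row A) \<and> A ^\<^sub>m (k + 1) * Y = A ^\<^sub>m k \<and> Y * A * Y = Y \<and> A * Y = Y * A"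
    have Yc: "Y \<in> carrier_mat n n" using Y A by auto
    show "Y = X" by (rule drazin_unique[OF A Yc X], insert Y X1 X2 X3, auto)
  qed
  show ?thesis
  proof (intro allI impI)
    fix i j assume i: "i < n" and j: "j < n"
    have "(drazin A * A) $$ (i,j) = (F * H) $$ (i,j)" unfolding dr XA ..
    also have "\<dots> = (det C * (F * H) $$ (i,j)) / det C" using dC by simp
    also have "det C * (F * H) $$ (i,j) = (\<Sum>\<beta>\<in>{\<beta>\<in>Jrn r n. i \<in> \<beta>}.
        det (submatrix (mat_col_replace (F * C * H) i (col (F * C * H) j)) \<beta> \<beta>))"
      by (rule main_identity(1)[OF F H C HF i j, symmetric])
    also have "det C = (\<Sum>\<beta>\<in>Jrn r n. det (submatrix (F * C * H) \<beta> \<beta>))"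
      by (rule main_identity(2)[OF F H C HF i j, symmetric])
    finally show "(drazin A * A) $$ (i,j) =
      (\<Sum>\<beta>\<in>{\<beta>\<in>Jrn r n. i \<in> \<beta>}.
        det (submatrix (mat_col_replace (A ^\<^sub>m (k+1)) i (col (A ^\<^sub>m (k+1)) j)) \<beta> \<beta>))
      / (\<Sum>\<beta>\<in>Jrn r n. det (submatrix (A ^\<^sub>m (k+1)) \<beta> \<beta>))" unfolding FCH .
  qed
qed


end
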